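(* Identify Kashiwara's crystal $B(\infty)$ with its polyhedral realization $\mathcal{B}(\infty)$ (equipped with the bicrystal structure described in the context), so that the Kashiwara–Park extended crystal $\widehat{B}(\infty)$ and the set $\widehat{\mathcal{B}}(\infty)$ are the same set. Then the maps $\widehat{\rm wt}$, $\widehat{\varepsilon}_{(i,k)}$, $\widetilde{E}_{(i,k)}$, $\widetilde{F}_{(i,k)}$ of the Kashiwara–Park extended crystal coincide, respectively, with the combinatorially defined maps $\widehat{\rm wt}$, $\widehat{\varepsilon}_{(i,k)}$, $\widetilde{E}_{(i,k)}$, $\widetilde{F}_{(i,k)}$ on $\widehat{\mathcal{B}}(\infty)$.
   Context: Let $\mathfrak{g}$ be a finite-dimensional simple Lie algebra of type $A_n$, $B_n$ or $D_n$ with index set $I=\{1,\dots,n\}$, and let $\iota_0=(\dots,n,\dots,1,n,\dots,1)$. The polyhedral realization $\mathcal{B}(\infty)\subset\mathbb{Z}_+^\infty$ is the image of $B(\infty)$ under the Kashiwara embedding for $\iota_0$; its points are written $b=(b_{s,t})$, where $b_{s,t}$ is the coordinate at the $s$-th occurrence of $t$ in $\iota_0$, $x_{s,t}$ are the coordinate functions, ${\bf e}_{s,t}$ the standard basis vectors (set to $0$ outside the relevant finite index set $\mathcal{I}_n^X$), and ${\bf v}(s,t)={\bf e}_{s,t}-{\bf e}_{s-1,t}$. Put $\beta_{s,t}=x_{s,t}+\sum_{k>t}\langle h_t,\alpha_k\rangle x_{s,k}+\sum_{k<t}\langle h_t,\alpha_k\rangle x_{s+1,k}+x_{s+1,t}$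 and $\beta^*_{s,t}=x_{s-1,t}+\sum_{k>t}\langle h_t,\alpha_k\rangle x_{s-1,k}+\sum_{k<t}\langle h_t,\alpha_k\rangle x_{s,k}+x_{s,t}$. For each $i$ there are tableaux $T_i$ (a single row with entries $T_i(1,t)=\beta_{t,i}$, of length $n+1-i$, $n$, $n-1$ in types $A_n,B_n,D_n$) and $T_i^*$ (a single row $T_i^*(1,t)=\beta^*_{t,i+1-t}$, $1\le t\le i$, for $i\le n$ in type $A$, $i\le n-1$ in type $B$, $i\le n-2$ in type $D$; for the remaining $i$ a staircase tableau: in type $B_n$, $T_n^*$ has shape $(n,n-1,\dots,1)$ with $T_n^*(s,t)=2\beta^*_{s+t-1,n-t}$ for $t\ge2$ and $T_n^*(s,1)=\beta^*_{s,n}$; in type $D_n$, $T_{n-1}^*$ has shape $(n-1,\dots,1)$ with $T_{n-1}^*(s,t)=\beta^*_{s+t-1,n-t}$ for $t\ge2$, $T_{n-1}^*(s,1)=\beta^*_{s,n-1}$ for $s$ odd and $\beta^*_{s,n}$ for $s$ even, and $T_n^*$ obtained by swapping $n-1$ and $n$ in the first column). For a cell $(s,t)$, $\mathcal{I}_T(s,t)$ denotes the index $(a,b)$ of the $\beta_{a,b}$ or $\beta^*_{a,b}$ in that cell. $\Pi_i$ is the set of nonempty partitions inside the shape of $T_i$, $\Pi_i^*$ the set of nonempty strict partitions inside the shape of $T_i^*$. For $\lambda=(l)\in\Pi_i$ let $\Gamma_\lambda=\sum_{s=l}^{|\eta|}\beta_{s,i}$ ($\eta$ the shape of $T_i$),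 and for $\mu\in\Pi_i^*$ let $\Gamma^*_\mu=\sum_{(s,t)\in\mu}T_i^*(s,t)$. The bicrystal structure on $\mathcal{B}(\infty)$ is: ${\rm wt}(b)=-\sum b_{s,t}\alpha_t$; $\varepsilon_i(b)=\max_{\lambda\in\Pi_i}\Gamma_\lambda(b)$, $\varepsilon_i^*(b)=\max_{\mu\in\Pi_i^*}\Gamma^*_\mu(b)$; with $m_i,M_i$ (resp. $m_i^*,M_i^*$) the minimal and maximal partitions attaining the maximum, $\widetilde{f}_i(b)=b+\sum_{(s,t)\in m_i}{\bf v}(\mathcal{I}_{T_i}(s,t))$, $\widetilde{e}_i(b)=b-\sum_{(s,t)\in M_i}{\bf v}(\mathcal{I}_{T_i}(s,t))$ (or ${\bf 0}$ if $\varepsilon_i(b)=0$), and similarly $\widetilde{f}_i^*,\widetilde{e}_i^*$ using $m_i^*,M_i^*,T_i^*$. (This bicrystal is shown in the paper to be isomorphic to Kashiwara's bicrystal $B(\infty)$ with its $*$-crystal structure.) Kashiwara–Park extended crystal: $\widehat{B}(\infty)$ is the set of ${\bf b}=(b^{(k)})_{k\in\mathbb{Z}}$ with $b^{(k)}\in B(\infty)$ and $b^{(k)}={\bf 1}$ for all but finitely many $k$, with $\widehat{\rm wt}({\bf b})=\sum_t(-1)^t{\rm wt}(b^{(t)})$, $\widehat{\varepsilon}_{(i,k)}({\bf b})=\varepsilon_i(b^{(k)})-\varepsilon_i^*(b^{(k+1)})$, $\widetilde{F}_{(i,k)}$ applying $\widetilde{f}_i$ to $b^{(k)}$ if $\widehat{\varepsilon}_{(i,k)}({\bf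 b})\ge0$ and $\widetilde{e}_i^*$ to $b^{(k+1)}$ otherwise, and $\widetilde{E}_{(i,k)}$ applying $\widetilde{e}_i$ to $b^{(k)}$ if $\widehat{\varepsilon}_{(i,k)}({\bf b})>0$ and $\widetilde{f}_i^*$ to $b^{(k+1)}$ otherwise. Combinatorial version: $\widehat{\mathcal{B}}(\infty)$ is the same kind of sequence set with entries in $\mathcal{B}(\infty)$. Let $\widehat{\Pi}_i=\Pi_i\cup\{\mu^*:\mu\in\Pi_i^*\}$ ordered by: $\lambda\le\mu^*$ always, $\lambda\le\lambda'$ iff $\lambda\subseteq\lambda'$, $\mu^*\le\nu^*$ iff $\mu\supseteq\nu$. Put $\widehat{\Gamma}^{(k)}_\lambda({\bf b})=\Gamma_\lambda(b^{(k)})$ and $\widehat{\Gamma}^{(k)}_{\mu^*}({\bf b})=\Gamma^*_\mu(b^{(k+1)})$; let $\widehat{m}_{(i,k)}({\bf b})$, $\widehat{M}_{(i,k)}({\bf b})$ be the minimal and maximal $\gamma\in\widehat{\Pi}_i$ attaining $\max_\gamma\widehat{\Gamma}^{(k)}_\gamma({\bf b})$. Define $\widehat{\rm wt}({\bf b})=\sum_t(-1)^t{\rm wt}(b^{(t)})$, $\widehat{\varepsilon}_{(i,k)}({\bf b})=\max_{\lambda\in\Pi_i}\widehat{\Gamma}^{(k)}_\lambda({\bf b})-\max_{\mu\in\Pi_i^*}\widehat{\Gamma}^{(k)}_{\mu^*}({\bf b})$, $\widetilde{E}_{(i,k)}({\bf b})={\bf b}-\sum_{(s,t)\in\lambda}{\bf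 v}(\mathcal{I}_{T_i}(s,t))^{(k)}$ if $\widehat{M}_{(i,k)}({\bf b})=\lambda$ is unstarred and ${\bf b}-\sum_{(s,t)\in\mu}{\bf v}(\mathcal{I}_{T_i^*}(s,t))^{(k+1)}$ if $\widehat{M}_{(i,k)}({\bf b})=\mu^*$, and $\widetilde{F}_{(i,k)}$ likewise with $+$ and $\widehat{m}_{(i,k)}$ (the superscript $(k)$ meaning the vector is placed in the $k$-th component). *)

theory Defs
  imports Main
begin

datatype ltype = TA | TB | TD

definition valid_type :: "ltype \<Rightarrow> nat \<Rightarrow> bool" where
  "valid_type X n = (case X of TA \<Rightarrow> 1 \<le> n | TB \<Rightarrow> 2 \<le> n | TD \<Rightarrow> 4 \<le> n)"

text \<open>Cartan integers cartan X n t k = <h_t, alpha_k>. Type B_n: alpha_n short.\<close>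
definition cartan :: "ltype \<Rightarrow> nat \<Rightarrow> nat \<Rightarrow> nat \<Rightarrow> int" where
  "cartan X n t k =
    (if t = k then 2 else
     (case X of
        TA \<Rightarrow> (if t = k + 1 \<or> k = t + 1 then -1 else 0)
      | TB \<Rightarrow> (if t = n \<and> k = n - 1 then -2
               else if t = k + 1 \<or> k = t + 1 then -1 else 0)
      | TD \<Rightarrow> (if {t, k} = {n - 1, n} then 0
               else if {t, k} = {n - 2, n} then -1
               else if t < n \<and> k < n \<and> (t = k + 1 \<or> k = t + 1) then -1 else 0)))"

text \<open>The finite index set I_n^X of coordinates (s,t) (s-th occurrence of t in iota_0).\<close>
definition Iset :: "ltype \<Rightarrow> nat \<Rightarrow> (nat \<times> nat) set" where
  "Iset X n = (case X of
      TA \<Rightarrow> {(s, t). 1 \<le> s \<and> 1 \<le> t \<and> t \<le> n \<and> s + t \<le> n + 1}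
    | TB \<Rightarrow> {(s, t). 1 \<le> s \<and> s \<le> n \<and> 1 \<le> t \<and> t \<le> n}
    | TD \<Rightarrow> {(s, t). 1 \<le> s \<and> s \<le> n - 1 \<and> 1 \<le> t \<and> t \<le> n})"

type_synonym vec = "nat \<times> nat \<Rightarrow> int"

definition xc :: "ltype \<Rightarrow> nat \<Rightarrow> vec \<Rightarrow> nat \<Rightarrow> nat \<Rightarrow> int" where
  "xc X n b s t = (if (s, t) \<in> Iset X n then b (s, t) else 0)"

definition ev :: "ltype \<Rightarrow> nat \<Rightarrow> nat \<times> nat \<Rightarrow> vec" where
  "ev X n q = (\<lambda>p. if p = q \<and> q \<in> Iset X n then 1 else 0)"

definition vv :: "ltype \<Rightarrow> nat \<Rightarrow> nat \<times> nat \<Rightarrow> vec" where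
  "vv X n q = (\<lambda>p. ev X n q p - (if fst q = 0 then 0 else ev X n (fst q - 1, snd q) p))"

definition beta :: "ltype \<Rightarrow> nat \<Rightarrow> nat \<Rightarrow> nat \<Rightarrow> vec \<Rightarrow> int" where
  "beta X n s t b = xc X n b s t
     + (\<Sum>k\<in>{t<..n}. cartan X n t k * xc X n b s k)
     + (\<Sum>k\<in>{1..<t}. cartan X n t k * xc X n b (s + 1) k)
     + xc X n b (s + 1) t"

text \<open>beta*_{s,t}; only used with s \<ge> 1 (x_{0,t} = 0 since (0,t) is not in I_n^X).\<close>
definition betaS :: "ltype \<Rightarrow> nat \<Rightarrow> nat \<Rightarrow> nat \<Rightarrow> vec \<Rightarrow> int" where
  "betaS X n s t b = xc X n b (s - 1) t
     + (\<Sum>k\<in>{t<..n}. cartan X n t k * xc X n b (s - 1) k)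
     + (\<Sum>k\<in>{1..<t}. cartan X n t k * xc X n b s k)
     + xc X n b s t"

text \<open>Cells are (row s, column t), both starting at 1.\<close>

definition Tlen :: "ltype \<Rightarrow> nat \<Rightarrow> nat \<Rightarrow> nat" where
  "Tlen X n i = (case X of TA \<Rightarrow> n + 1 - i | TB \<Rightarrow> n | TD \<Rightarrow> n - 1)"

definition Tshape :: "ltype \<Rightarrow> nat \<Rightarrow> nat \<Rightarrow> (nat \<times> nat) set" where
  "Tshape X n i = {(1, t) | t. 1 \<le> t \<and> t \<le> Tlen X n i}"

text \<open>Index I_{T_i}(s,t) of the beta in cell (s,t): T_i(1,t) = beta_{t,i}.\<close>
definition Tidx :: "ltype \<Rightarrow> nat \<Rightarrow> nat \<Rightarrow> nat \<times> nat \<Rightarrow> nat \<times> nat" where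
  "Tidx X n i c = (snd c, i)"

text \<open>Is T_i^* a staircase tableau (rather than a single row)?\<close>
definition stair :: "ltype \<Rightarrow> nat \<Rightarrow> nat \<Rightarrow> bool" where
  "stair X n i = (case X of TA \<Rightarrow> False | TB \<Rightarrow> i = n | TD \<Rightarrow> n - 1 \<le> i)"

definition TSshape :: "ltype \<Rightarrow> nat \<Rightarrow> nat \<Rightarrow> (nat \<times> nat) set" where
  "TSshape X n i =
    (if \<not> stair X n i then {(1, t) | t. 1 \<le> t \<and> t \<le> i}
     else (case X of
             TB \<Rightarrow> {(s, t). 1 \<le> s \<and> 1 \<le> t \<and> s + t \<le> n + 1}
           | _ \<Rightarrow> {(s, t). 1 \<le> s \<and> 1 \<le> t \<and> s + t \<le> n}))"

text \<open>Index I_{T_i^*}(s,t) of the beta* in cell (s,t).\<close>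
definition TSidx :: "ltype \<Rightarrow> nat \<Rightarrow> nat \<Rightarrow> nat \<times> nat \<Rightarrow> nat \<times> nat" where
  "TSidx X n i c =
    (let s = fst c; t = snd c in
     if \<not> stair X n i then (t, i + 1 - t)
     else (case X of
             TB \<Rightarrow> (if t = 1 then (s, n) else (s + t - 1, n + 1 - t))
           | _ \<Rightarrow> (if t = 1 then
                      (if (odd s \<longleftrightarrow> i = n - 1) then (s, n - 1) else (s, n))
                    else (s + t - 1, n - t))))"

definition TScoef :: "ltype \<Rightarrow> nat \<Rightarrow> nat \<Rightarrow> nat \<times> nat \<Rightarrow> int" where
  "TScoef X n i c = (if stair X n i \<and> X = TB \<and> snd c \<ge> 2 then 2 else 1)"

definition young :: "(nat \<times> nat) set \<Rightarrow> bool" where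
  "young \<mu> = (\<forall>s t. (s, t) \<in> \<mu> \<longrightarrow> 1 \<le> s \<and> 1 \<le> t \<and>
                 (\<forall>s' t'. 1 \<le> s' \<and> s' \<le> s \<and> 1 \<le> t' \<and> t' \<le> t \<longrightarrow> (s', t') \<in> \<mu>))"

definition rowlen :: "(nat \<times> nat) set \<Rightarrow> nat \<Rightarrow> nat" where
  "rowlen \<mu> s = card {t. (s, t) \<in> \<mu>}"

definition strict :: "(nat \<times> nat) set \<Rightarrow> bool" where
  "strict \<mu> = (\<forall>s\<ge>1. 0 < rowlen \<mu> (Suc s) \<longrightarrow> rowlen \<mu> (Suc s) < rowlen \<mu> s)"

definition Pi :: "ltype \<Rightarrow> nat \<Rightarrow> nat \<Rightarrow> (nat \<times> nat) set set" where
  "Pi X n i = {la. young la \<and> la \<subseteq> Tshape X n i \<and> la \<noteq> {}}"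

definition PiS :: "ltype \<Rightarrow> nat \<Rightarrow> nat \<Rightarrow> (nat \<times> nat) set set" where
  "PiS X n i = {\<mu>. young \<mu> \<and> strict \<mu> \<and> \<mu> \<subseteq> TSshape X n i \<and> \<mu> \<noteq> {}}"

text \<open>Gamma_lambda for lambda = (l): sum of beta_{s,i} for s from l to the length of T_i.\<close>
definition Gamma :: "ltype \<Rightarrow> nat \<Rightarrow> nat \<Rightarrow> (nat \<times> nat) set \<Rightarrow> vec \<Rightarrow> int" where
  "Gamma X n i la b = (\<Sum>s\<in>{card la..Tlen X n i}. beta X n s i b)"

definition GammaS :: "ltype \<Rightarrow> nat \<Rightarrow> nat \<Rightarrow> (nat \<times> nat) set \<Rightarrow> vec \<Rightarrow> int" where
  "GammaS X n i \<mu> b =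
     (\<Sum>c\<in>\<mu>. TScoef X n i c * betaS X n (fst (TSidx X n i c)) (snd (TSidx X n i c)) b)"

definition wt :: "ltype \<Rightarrow> nat \<Rightarrow> vec \<Rightarrow> nat \<Rightarrow> int" where
  \<comment> \<open>coefficient of alpha_t in wt(b) = - sum b_{s,t} alpha_t\<close>
  "wt X n b t = - (\<Sum>s\<in>{s. (s, t) \<in> Iset X n}. b (s, t))"

definition eps :: "ltype \<Rightarrow> nat \<Rightarrow> nat \<Rightarrow> vec \<Rightarrow> int" where
  "eps X n i b = Max ((\<lambda>la. Gamma X n i la b) ` Pi X n i)"

definition epsS :: "ltype \<Rightarrow> nat \<Rightarrow> nat \<Rightarrow> vec \<Rightarrow> int" where
  "epsS X n i b = Max ((\<lambda>\<mu>. GammaS X n i \<mu> b) ` PiS X n i)"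

definition minimal_in :: "'a set set \<Rightarrow> 'a set" where
  "minimal_in S = (THE la. la \<in> S \<and> (\<forall>\<mu>\<in>S. la \<subseteq> \<mu>))"

definition maximal_in :: "'a set set \<Rightarrow> 'a set" where
  "maximal_in S = (THE la. la \<in> S \<and> (\<forall>\<mu>\<in>S. \<mu> \<subseteq> la))"

definition mm :: "ltype \<Rightarrow> nat \<Rightarrow> nat \<Rightarrow> vec \<Rightarrow> (nat \<times> nat) set" where
  "mm X n i b = minimal_in {la\<in>Pi X n i. Gamma X n i la b = eps X n i b}"
definition MM :: "ltype \<Rightarrow> nat \<Rightarrow> nat \<Rightarrow> vec \<Rightarrow> (nat \<times> nat) set" where
  "MM X n i b = maximal_in {la\<in>Pi X n i. Gamma X n i la b = eps X n i b}"
definition mmS :: "ltype \<Rightarrow> nat \<Rightarrow> nat \<Rightarrow> vec \<Rightarrow> (nat \<times> nat) set" where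
  "mmS X n i b = minimal_in {\<mu>\<in>PiS X n i. GammaS X n i \<mu> b = epsS X n i b}"
definition MMS :: "ltype \<Rightarrow> nat \<Rightarrow> nat \<Rightarrow> vec \<Rightarrow> (nat \<times> nat) set" where
  "MMS X n i b = maximal_in {\<mu>\<in>PiS X n i. GammaS X n i \<mu> b = epsS X n i b}"

definition vsum :: "ltype \<Rightarrow> nat \<Rightarrow> (nat \<times> nat \<Rightarrow> nat \<times> nat) \<Rightarrow> (nat \<times> nat) set \<Rightarrow> vec" where
  "vsum X n idx la = (\<lambda>p. \<Sum>c\<in>la. vv X n (idx c) p)"

definition ftil :: "ltype \<Rightarrow> nat \<Rightarrow> nat \<Rightarrow> vec \<Rightarrow> vec" where
  "ftil X n i b = (\<lambda>p. b p + vsum X n (Tidx X n i) (mm X n i b) p)"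

text \<open>None plays the role of 0.\<close>
definition etil :: "ltype \<Rightarrow> nat \<Rightarrow> nat \<Rightarrow> vec \<Rightarrow> vec option" where
  "etil X n i b = (if eps X n i b = 0 then None
                   else Some (\<lambda>p. b p - vsum X n (Tidx X n i) (MM X n i b) p))"

definition ftilS :: "ltype \<Rightarrow> nat \<Rightarrow> nat \<Rightarrow> vec \<Rightarrow> vec" where
  "ftilS X n i b = (\<lambda>p. b p + vsum X n (TSidx X n i) (mmS X n i b) p)"

definition etilS :: "ltype \<Rightarrow> nat \<Rightarrow> nat \<Rightarrow> vec \<Rightarrow> vec option" where
  "etilS X n i b = (if epsS X n i b = 0 then None
                    else Some (\<lambda>p. b p - vsum X n (TSidx X n i) (MMS X n i b) p))"

text \<open>The polyhedral realization B(infinity): the vectors reachable from the zero vector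
  (the highest weight element 1) by the operators f_i.\<close>
inductive_set Binf :: "ltype \<Rightarrow> nat \<Rightarrow> vec set" for X n where
  zero: "(\<lambda>_. 0) \<in> Binf X n"
| step: "b \<in> Binf X n \<Longrightarrow> i \<in> {1..n} \<Longrightarrow> ftil X n i b \<in> Binf X n"

record 'b bicrystal =
  bwt :: "'b \<Rightarrow> nat \<Rightarrow> int"
  beps :: "nat \<Rightarrow> 'b \<Rightarrow> int"
  bepsS :: "nat \<Rightarrow> 'b \<Rightarrow> int"
  be :: "nat \<Rightarrow> 'b \<Rightarrow> 'b option"
  bf :: "nat \<Rightarrow> 'b \<Rightarrow> 'b option"
  beS :: "nat \<Rightarrow> 'b \<Rightarrow> 'b option"
  bfS :: "nat \<Rightarrow> 'b \<Rightarrow> 'b option"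

definition sgnp :: "int \<Rightarrow> int" where
  "sgnp t = (if even t then 1 else -1)"

definition kp_set :: "'b set \<Rightarrow> 'b \<Rightarrow> (int \<Rightarrow> 'b) set" where
  "kp_set B one = {bb. (\<forall>k. bb k \<in> B) \<and> finite {k. bb k \<noteq> one}}"

definition kp_wt :: "'b bicrystal \<Rightarrow> 'b \<Rightarrow> (int \<Rightarrow> 'b) \<Rightarrow> nat \<Rightarrow> int" where
  "kp_wt C one bb j = (\<Sum>t\<in>{t. bb t \<noteq> one}. sgnp t * bwt C (bb t) j)"

definition kp_eps :: "'b bicrystal \<Rightarrow> nat \<Rightarrow> int \<Rightarrow> (int \<Rightarrow> 'b) \<Rightarrow> int" where
  "kp_eps C i k bb = beps C i (bb k) - bepsS C i (bb (k + 1))"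

definition kp_F :: "'b bicrystal \<Rightarrow> nat \<Rightarrow> int \<Rightarrow> (int \<Rightarrow> 'b) \<Rightarrow> (int \<Rightarrow> 'b) option" where
  "kp_F C i k bb = (if kp_eps C i k bb \<ge> 0
      then map_option (\<lambda>c. bb(k := c)) (bf C i (bb k))
      else map_option (\<lambda>c. bb(k + 1 := c)) (beS C i (bb (k + 1))))"

definition kp_E :: "'b bicrystal \<Rightarrow> nat \<Rightarrow> int \<Rightarrow> (int \<Rightarrow> 'b) \<Rightarrow> (int \<Rightarrow> 'b) option" where
  "kp_E C i k bb = (if kp_eps C i k bb > 0
      then map_option (\<lambda>c. bb(k := c)) (be C i (bb k))
      else map_option (\<lambda>c. bb(k + 1 := c)) (bfS C i (bb (k + 1))))"

text \<open>The polyhedral bicrystal (identified with Kashiwara's B(infinity)).\<close>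
definition poly :: "ltype \<Rightarrow> nat \<Rightarrow> vec bicrystal" where
  "poly X n = \<lparr> bwt = wt X n, beps = eps X n, bepsS = epsS X n,
      be = etil X n, bf = (\<lambda>i b. Some (ftil X n i b)),
      beS = etilS X n, bfS = (\<lambda>i b. Some (ftilS X n i b)) \<rparr>"

definition Bhat :: "ltype \<Rightarrow> nat \<Rightarrow> (int \<Rightarrow> vec) set" where
  "Bhat X n = {bb. (\<forall>k. bb k \<in> Binf X n) \<and> finite {k. bb k \<noteq> (\<lambda>_. 0)}}"

text \<open>Inl lambda = unstarred lambda, Inr mu = mu^*.\<close>
definition PiHat :: "ltype \<Rightarrow> nat \<Rightarrow> nat \<Rightarrow> ((nat \<times> nat) set + (nat \<times> nat) set) set" where
  "PiHat X n i = Inl ` Pi X n i \<union> Inr ` PiS X n i"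

fun le_hat :: "'a set + 'a set \<Rightarrow> 'a set + 'a set \<Rightarrow> bool" where
  "le_hat (Inl a) (Inl b) = (a \<subseteq> b)"
| "le_hat (Inl a) (Inr b) = True"
| "le_hat (Inr a) (Inl b) = False"
| "le_hat (Inr a) (Inr b) = (b \<subseteq> a)"

definition GammaHat :: "ltype \<Rightarrow> nat \<Rightarrow> nat \<Rightarrow> int \<Rightarrow>
    (nat \<times> nat) set + (nat \<times> nat) set \<Rightarrow> (int \<Rightarrow> vec) \<Rightarrow> int" where
  "GammaHat X n i k \<gamma> bb = (case \<gamma> of Inl la \<Rightarrow> Gamma X n i la (bb k)
                                    | Inr \<mu> \<Rightarrow> GammaS X n i \<mu> (bb (k + 1)))"

definition attHat :: "ltype \<Rightarrow> nat \<Rightarrow> nat \<Rightarrow> int \<Rightarrow> (int \<Rightarrow> vec) \<Rightarrow>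
    ((nat \<times> nat) set + (nat \<times> nat) set) set" where
  "attHat X n i k bb = {\<gamma>\<in>PiHat X n i. GammaHat X n i k \<gamma> bb =
       Max ((\<lambda>\<delta>. GammaHat X n i k \<delta> bb) ` PiHat X n i)}"

definition mHat where
  "mHat X n i k bb = (THE \<gamma>. \<gamma> \<in> attHat X n i k bb \<and> (\<forall>\<delta>\<in>attHat X n i k bb. le_hat \<gamma> \<delta>))"

definition MHat where
  "MHat X n i k bb = (THE \<gamma>. \<gamma> \<in> attHat X n i k bb \<and> (\<forall>\<delta>\<in>attHat X n i k bb. le_hat \<delta> \<gamma>))"

definition wtHat :: "ltype \<Rightarrow> nat \<Rightarrow> (int \<Rightarrow> vec) \<Rightarrow> nat \<Rightarrow> int" where
  "wtHat X n bb j = (\<Sum>t\<in>{t. bb t \<noteq> (\<lambda>_. 0)}. sgnp t * wt X n (bb t) j)"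

definition epsHat :: "ltype \<Rightarrow> nat \<Rightarrow> nat \<Rightarrow> int \<Rightarrow> (int \<Rightarrow> vec) \<Rightarrow> int" where
  "epsHat X n i k bb =
     Max ((\<lambda>la. GammaHat X n i k (Inl la) bb) ` Pi X n i)
   - Max ((\<lambda>\<mu>. GammaHat X n i k (Inr \<mu>) bb) ` PiS X n i)"

definition EHat :: "ltype \<Rightarrow> nat \<Rightarrow> nat \<Rightarrow> int \<Rightarrow> (int \<Rightarrow> vec) \<Rightarrow> (int \<Rightarrow> vec)" where
  "EHat X n i k bb = (case MHat X n i k bb of
      Inl la \<Rightarrow> bb(k := (\<lambda>p. bb k p - vsum X n (Tidx X n i) la p))
    | Inr \<mu> \<Rightarrow> bb(k + 1 := (\<lambda>p. bb (k + 1) p + vsum X n (TSidx X n i) \<mu> p)))"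

definition FHat :: "ltype \<Rightarrow> nat \<Rightarrow> nat \<Rightarrow> int \<Rightarrow> (int \<Rightarrow> vec) \<Rightarrow> (int \<Rightarrow> vec)" where
  "FHat X n i k bb = (case mHat X n i k bb of
      Inl la \<Rightarrow> bb(k := (\<lambda>p. bb k p + vsum X n (Tidx X n i) la p))
    | Inr \<mu> \<Rightarrow> bb(k + 1 := (\<lambda>p. bb (k + 1) p - vsum X n (TSidx X n i) \<mu> p)))"

end

theory Submission
  imports Defs
begin

lemma Iset_pos: "(s,t) \<in> Iset X n \<Longrightarrow> 1 \<le> s \<and> 1 \<le> t \<and> t \<le> n"
  by (auto simp: Iset_def split: ltype.splits)

lemma xc_0 [simp]: "xc X n b 0 t = 0" "xc X n b s 0 = 0"
  by (auto simp: xc_def dest: Iset_pos)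

lemma xc_gt [simp]: "n < t \<Longrightarrow> xc X n b s t = 0"
  by (auto simp: xc_def dest: Iset_pos)

lemma finite_Iset: "finite (Iset X n)"
proof -
  have "Iset X n \<subseteq> {0..n+1} \<times> {0..n}"
    by (auto simp: Iset_def split: ltype.splits)
  thus ?thesis by (rule finite_subset) auto
qed

lemma betaS_beta: "1 \<le> s \<Longrightarrow> betaS X n s t b = beta X n (s - 1) t b"
  by (simp add: betaS_def beta_def)

lemma xc_add_ev: "xc X n (\<lambda>p. b p + ev X n q p) s t = xc X n b s t + (if (s,t) = q \<and> q \<in> Iset X n then 1 else 0)"
  by (auto simp: xc_def ev_def)

lemma sum_only:
  assumes "finite A" "\<And>k. k \<in> A \<Longrightarrow> k \<notin> S \<Longrightarrow> f k = 0"
  shows "sum f A = sum f (A \<inter> S)"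
  using assms by (intro sum.mono_neutral_right) auto

lemma tele: "(\<Sum>t\<in>{1..N::nat}. (h t - h (t - 1))) = h N - (h 0 :: int)"
  by (induction N) (auto simp: atLeastAtMostSuc_conv)

definition row :: "nat \<Rightarrow> (nat \<times> nat) set" where
  "row r = {(1,t) | t. 1 \<le> t \<and> t \<le> r}"

lemma row_img: "row r = (\<lambda>t. (1,t)) ` {1..r}"
  by (auto simp: row_def)

lemma card_row [simp]: "card (row r) = r"
  by (simp add: row_img card_image inj_on_def)

lemma finite_row [simp]: "finite (row r)"
  by (simp add: row_img)

lemma row_Int: "row a \<inter> row b = row (min a b)"
  by (auto simp: row_def)

lemma row_Un: "row a \<union> row b = row (max a b)"
  by (auto simp: row_def)

lemma row_sub: "row a \<subseteq> row b \<longleftrightarrow> a \<le> b"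
proof
  assume h: "row a \<subseteq> row b"
  show "a \<le> b"
  proof (cases "a = 0")
    case False
    hence "(1, a) \<in> row a" by (auto simp: row_def)
    thus ?thesis using h by (auto simp: row_def)
  qed simp
qed (auto simp: row_def)

lemma row_Suc: "row (Suc r) = insert (1, Suc r) (row r)"
  by (auto simp: row_def)

lemma row_inj: "row a = row b \<Longrightarrow> a = b"
  by (metis card_row)

lemma Tshape_row: "Tshape X n i = row (Tlen X n i)"
  by (simp add: Tshape_def row_def)

lemma young_row: "young (row r)"
  by (auto simp: young_def row_def)

lemma young_pos: "young \<mu> \<Longrightarrow> (s,t) \<in> \<mu> \<Longrightarrow> 1 \<le> s \<and> 1 \<le> t"
  unfolding young_def by blast

lemma young_down: "young \<mu> \<Longrightarrow> (s,t) \<in> \<mu> \<Longrightarrow> 1 \<le> s' \<Longrightarrow> s' \<le> s \<Longrightarrow> 1 \<le> t' \<Longrightarrow> t' \<le> t \<Longrightarrow> (s',t') \<in> \<mu>"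
  unfolding young_def by blast

lemma Pi_char: "la \<in> Pi X n i \<longleftrightarrow> (\<exists>r\<in>{1..Tlen X n i}. la = row r)"
proof
  assume "la \<in> Pi X n i"
  hence y: "young la" and sub: "la \<subseteq> row (Tlen X n i)" and ne: "la \<noteq> {}"
    by (auto simp: Pi_def Tshape_row)
  have fin: "finite la" using finite_subset[OF sub] by simp
  define r where "r = Max (snd ` la)"
  have rin: "r \<in> snd ` la" unfolding r_def using fin ne by (intro Max_in) auto
  then obtain s0 where s0: "(s0, r) \<in> la" by force
  have s01: "s0 = 1" using s0 sub by (auto simp: row_def)
  have "la = row r"
  proof
    show "la \<subseteq> row r"
    proof
      fix c assume c: "c \<in> la"
      then obtain t where ct: "c = (1,t)" "1 \<le> t" using sub by (auto simp: row_def)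
      have "t \<in> snd ` la" using c ct by force
      hence "t \<le> r" unfolding r_def using fin by (intro Max_ge) auto
      thus "c \<in> row r" using ct by (auto simp: row_def)
    qed
    show "row r \<subseteq> la"
    proof
      fix c assume "c \<in> row r"
      then obtain t where ct: "c = (1,t)" "1 \<le> t" "t \<le> r" by (auto simp: row_def)
      show "c \<in> la" unfolding ct(1) using young_down[OF y s0, of 1 t] s01 ct by simp
    qed
  qed
  moreover have "1 \<le> r" using young_pos[OF y s0] by simp
  moreover have "r \<le> Tlen X n i" using s0 sub by (auto simp: row_def)
  ultimately show "\<exists>r\<in>{1..Tlen X n i}. la = row r" by auto
next
  assume "\<exists>r\<in>{1..Tlen X n i}. la = row r"
  then obtain r where r: "1 \<le> r" "r \<le> Tlen X n i" "la = row r" by auto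
  have "young la" using r young_row by simp
  moreover have "la \<subseteq> Tshape X n i" using r by (simp add: Tshape_row row_sub)
  moreover have "(1,1) \<in> la" using r by (simp add: row_def)
  ultimately show "la \<in> Pi X n i" unfolding Pi_def by blast
qed

lemma Pi_eq: "Pi X n i = row ` {1..Tlen X n i}"
  using Pi_char by blast

lemma finite_Pi: "finite (Pi X n i)"
  by (simp add: Pi_eq)

lemma Gamma_row: "Gamma X n i (row r) b = (\<Sum>s\<in>{r..Tlen X n i}. beta X n s i b)"
  by (simp add: Gamma_def)

lemma Gamma_row_step:
  assumes "r \<le> Tlen X n i"
  shows "Gamma X n i (row r) b = beta X n r i b + Gamma X n i (row (Suc r)) b"
proof -
  have "{r..Tlen X n i} = insert r {Suc r..Tlen X n i}" using assms by auto
  thus ?thesis by (simp add: Gamma_row)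
qed

lemma Inter_in:
  assumes "finite F" "F \<noteq> {}" "F \<subseteq> S" "\<And>a b. a \<in> S \<Longrightarrow> b \<in> S \<Longrightarrow> a \<inter> b \<in> S"
  shows "\<Inter>F \<in> S"
  using assms
proof (induction F rule: finite_ne_induct)
  case (singleton x) thus ?case by simp
next
  case (insert x F) thus ?case by simp
qed

lemma Union_in:
  assumes "finite F" "F \<noteq> {}" "F \<subseteq> S" "\<And>a b. a \<in> S \<Longrightarrow> b \<in> S \<Longrightarrow> a \<union> b \<in> S"
  shows "\<Union>F \<in> S"
  using assms
proof (induction F rule: finite_ne_induct)
  case (singleton x) thus ?case by simp
next
  case (insert x F) thus ?case by simp
qed

lemma minimal_in_lat:
  assumes "finite S" "S \<noteq> {}" "\<And>a b. a \<in> S \<Longrightarrow> b \<in> S \<Longrightarrow> a \<inter> b \<in> S"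
  shows "minimal_in S \<in> S \<and> (\<forall>m\<in>S. minimal_in S \<subseteq> m)"
proof -
  have I: "\<Inter>S \<in> S" using Inter_in[OF assms(1,2) _ assms(3)] by blast
  have "minimal_in S = \<Inter>S"
    unfolding minimal_in_def
    by (rule the_equality) (use I in blast)+
  thus ?thesis using I by auto
qed

lemma maximal_in_lat:
  assumes "finite S" "S \<noteq> {}" "\<And>a b. a \<in> S \<Longrightarrow> b \<in> S \<Longrightarrow> a \<union> b \<in> S"
  shows "maximal_in S \<in> S \<and> (\<forall>m\<in>S. m \<subseteq> maximal_in S)"
proof -
  have I: "\<Union>S \<in> S" using Union_in[OF assms(1,2) _ assms(3)] by blast
  have "maximal_in S = \<Union>S"
    unfolding maximal_in_def
    by (rule the_equality) (use I in blast)+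
  thus ?thesis using I by auto
qed

lemma Tlen_pos: "valid_type X n \<Longrightarrow> i \<in> {1..n} \<Longrightarrow> 1 \<le> Tlen X n i"
  by (auto simp: valid_type_def Tlen_def split: ltype.splits)

lemma Pi_ne: "valid_type X n \<Longrightarrow> i \<in> {1..n} \<Longrightarrow> Pi X n i \<noteq> {}"
  using Tlen_pos by (auto simp: Pi_eq)

lemma eps_ge: "la \<in> Pi X n i \<Longrightarrow> Gamma X n i la b \<le> eps X n i b"
  unfolding eps_def using finite_Pi by (intro Max_ge) auto

lemma eps_attained: "valid_type X n \<Longrightarrow> i \<in> {1..n} \<Longrightarrow> \<exists>la\<in>Pi X n i. Gamma X n i la b = eps X n i b"
  unfolding eps_def using finite_Pi Pi_ne
  by (metis (no_types, lifting) Max_in finite_imageI image_iff image_is_empty)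

definition attP where "attP X n i b = {la\<in>Pi X n i. Gamma X n i la b = eps X n i b}"

lemma attP_lat:
  assumes "valid_type X n" "i \<in> {1..n}"
  shows "finite (attP X n i b)" "attP X n i b \<noteq> {}"
    "\<And>a c. a \<in> attP X n i b \<Longrightarrow> c \<in> attP X n i b \<Longrightarrow> a \<inter> c \<in> attP X n i b"
    "\<And>a c. a \<in> attP X n i b \<Longrightarrow> c \<in> attP X n i b \<Longrightarrow> a \<union> c \<in> attP X n i b"
proof -
  show "finite (attP X n i b)" unfolding attP_def using finite_Pi by auto
  show "attP X n i b \<noteq> {}" unfolding attP_def using eps_attained[OF assms] by auto
  fix a c assume a: "a \<in> attP X n i b" and c: "c \<in> attP X n i b"
  then obtain r1 r2 where "a = row r1" "c = row r2" unfolding attP_def Pi_eq by blast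
  hence "a \<inter> c \<in> {a, c}" "a \<union> c \<in> {a,c}" by (auto simp: row_Int row_Un min_def max_def)
  thus "a \<inter> c \<in> attP X n i b" "a \<union> c \<in> attP X n i b" using a c by auto
qed

lemma mm_prop:
  assumes "valid_type X n" "i \<in> {1..n}"
  shows "mm X n i b \<in> attP X n i b \<and> (\<forall>m\<in>attP X n i b. mm X n i b \<subseteq> m)"
  unfolding mm_def attP_def[symmetric] using minimal_in_lat[OF attP_lat(1-3)[OF assms]] by blast

lemma MM_prop:
  assumes "valid_type X n" "i \<in> {1..n}"
  shows "MM X n i b \<in> attP X n i b \<and> (\<forall>m\<in>attP X n i b. m \<subseteq> MM X n i b)"
  unfolding MM_def attP_def[symmetric] using maximal_in_lat[OF attP_lat(1,2,4)[OF assms]] by blast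

lemma vsum_row: "vsum X n (Tidx X n i) (row r) = ev X n (r, i)"
proof (induction r)
  case 0
  show ?case by (auto simp: vsum_def row_def ev_def fun_eq_iff dest: Iset_pos)
next
  case (Suc r)
  have "(1, Suc r) \<notin> row r" by (auto simp: row_def)
  hence "vsum X n (Tidx X n i) (row (Suc r)) = (\<lambda>p. vv X n (Suc r, i) p + vsum X n (Tidx X n i) (row r) p)"
    by (simp add: vsum_def row_Suc Tidx_def)
  thus ?case using Suc by (simp add: vv_def fun_eq_iff)
qed

lemma ftil_form:
  assumes "valid_type X n" "i \<in> {1..n}"
  obtains m where "m \<in> {1..Tlen X n i}" "Gamma X n i (row m) b = eps X n i b"
    "\<And>r. r \<in> {1..Tlen X n i} \<Longrightarrow> r < m \<Longrightarrow> Gamma X n i (row r) b < eps X n i b"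
    "ftil X n i b = (\<lambda>p. b p + ev X n (m, i) p)"
proof -
  from mm_prop[OF assms, of b] obtain m where m: "m \<in> {1..Tlen X n i}" "mm X n i b = row m"
    "Gamma X n i (row m) b = eps X n i b" "\<forall>la\<in>attP X n i b. row m \<subseteq> la"
    unfolding attP_def Pi_eq by auto
  have lt: "Gamma X n i (row r) b < eps X n i b" if "r \<in> {1..Tlen X n i}" "r < m" for r
  proof -
    have "row r \<in> Pi X n i" using that by (auto simp: Pi_eq)
    hence le: "Gamma X n i (row r) b \<le> eps X n i b" by (rule eps_ge)
    have "row r \<notin> attP X n i b" using m(4) that row_sub by fastforce
    thus ?thesis using le \<open>row r \<in> Pi X n i\<close> by (auto simp: attP_def)
  qed
  show ?thesis
    by (rule that[OF m(1) m(3) lt]) (simp_all add: ftil_def m(2) vsum_row)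
qed

lemma Tlen_Iset:
  assumes "valid_type X n" "i \<in> {1..n}" "m \<in> {1..Tlen X n i}"
  shows "(m, i) \<in> Iset X n"
  using assms by (auto simp: Iset_def Tlen_def valid_type_def split: ltype.splits)

lemma ftil_data:
  assumes "valid_type X n" "j \<in> {1..n}"
  obtains m where "m \<in> {1..Tlen X n j}"
    "\<And>s t. xc X n (ftil X n j b) s t = xc X n b s t + (if (s,t) = (m,j) then 1 else 0)"
    "2 \<le> m \<Longrightarrow> beta X n (m - 1) j b < 0"
proof -
  obtain m where m: "m \<in> {1..Tlen X n j}" "Gamma X n j (row m) b = eps X n j b"
    "\<And>r. r \<in> {1..Tlen X n j} \<Longrightarrow> r < m \<Longrightarrow> Gamma X n j (row r) b < eps X n j b"
    "ftil X n j b = (\<lambda>p. b p + ev X n (m, j) p)"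
    using ftil_form[OF assms] by blast
  have I: "(m,j) \<in> Iset X n" using Tlen_Iset[OF assms m(1)] .
  have x: "xc X n (ftil X n j b) s t = xc X n b s t + (if (s,t) = (m,j) then 1 else 0)" for s t
    using I by (simp add: m(4) xc_add_ev)
  have neg: "beta X n (m - 1) j b < 0" if "2 \<le> m"
  proof -
    have r: "m - 1 \<in> {1..Tlen X n j}" "m - 1 < m" using that m(1) by auto
    have "Gamma X n j (row (m - 1)) b = beta X n (m - 1) j b + Gamma X n j (row (Suc (m - 1))) b"
      using r by (intro Gamma_row_step) auto
    moreover have "Suc (m - 1) = m" using that by simp
    ultimately show ?thesis using m(3)[OF r] m(2) by simp
  qed
  show ?thesis by (rule that[OF m(1) x neg])
qed

lemma eps_ge_beta:
  assumes "valid_type X n" "i \<in> {1..n}"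
  shows "beta X n (Tlen X n i) i b \<le> eps X n i b"
proof -
  have "row (Tlen X n i) \<in> Pi X n i" using Tlen_pos[OF assms] by (auto simp: Pi_eq)
  hence "Gamma X n i (row (Tlen X n i)) b \<le> eps X n i b" by (rule eps_ge)
  thus ?thesis by (simp add: Gamma_row)
qed

section \<open>Type A\<close>

lemma betaA:
  assumes "1 \<le> t" "t \<le> n"
  shows "beta TA n s t b = xc TA n b s t - xc TA n b s (t+1) - xc TA n b (s+1) (t-1) + xc TA n b (s+1) t"
proof -
  have u: "(\<Sum>k\<in>{t<..n}. cartan TA n t k * xc TA n b s k) = - xc TA n b s (t+1)"
  proof -
    have "(\<Sum>k\<in>{t<..n}. cartan TA n t k * xc TA n b s k) = (\<Sum>k\<in>{t<..n} \<inter> {t+1}. cartan TA n t k * xc TA n b s k)"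
      by (rule sum_only) (auto simp: cartan_def)
    also have "\<dots> = - xc TA n b s (t+1)"
      by (cases "t + 1 \<le> n") (auto simp: cartan_def Int_insert_right)
    finally show ?thesis .
  qed
  have l: "(\<Sum>k\<in>{1..<t}. cartan TA n t k * xc TA n b (s+1) k) = - xc TA n b (s+1) (t-1)"
  proof -
    have "(\<Sum>k\<in>{1..<t}. cartan TA n t k * xc TA n b (s+1) k) = (\<Sum>k\<in>{1..<t} \<inter> {t-1}. cartan TA n t k * xc TA n b (s+1) k)"
      by (rule sum_only) (auto simp: cartan_def)
    also have "\<dots> = - xc TA n b (s+1) (t-1)"
      using assms by (cases "2 \<le> t") (auto simp: cartan_def Int_insert_right)
    finally show ?thesis .
  qed
  show ?thesis unfolding beta_def u l by simp
qed

definition nonneg where "nonneg X n b = (\<forall>s t. 0 \<le> xc X n b s t)"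

definition invA where
  "invA n b = (\<forall>s t. 1 \<le> s \<longrightarrow> 2 \<le> t \<longrightarrow> xc TA n b (s+1) (t-1) \<le> xc TA n b s t)"

lemma closeA:
  assumes v: "valid_type TA n" and j: "j \<in> {1..n}" and nn: "nonneg TA n b" and inv: "invA n b"
  shows "nonneg TA n (ftil TA n j b) \<and> invA n (ftil TA n j b)"
proof -
  obtain m where m: "m \<in> {1..Tlen TA n j}"
    and x: "\<And>s t. xc TA n (ftil TA n j b) s t = xc TA n b s t + (if (s,t) = (m,j) then 1 else 0)"
    and neg: "2 \<le> m \<Longrightarrow> beta TA n (m - 1) j b < 0"
    using ftil_data[OF v j] by blast
  have "nonneg TA n (ftil TA n j b)" using nn unfolding nonneg_def x by (simp add: add_nonneg_nonneg)
  moreover have "invA n (ftil TA n j b)"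
    unfolding invA_def
  proof (intro allI impI)
    fix s t :: nat assume s: "1 \<le> s" and t: "2 \<le> t"
    have i0: "xc TA n b (s+1) (t-1) \<le> xc TA n b s t" using inv s t unfolding invA_def by blast
    show "xc TA n (ftil TA n j b) (s+1) (t-1) \<le> xc TA n (ftil TA n j b) s t"
    proof (cases "(s+1, t-1) = (m, j)")
      case False
      hence "xc TA n (ftil TA n j b) (s+1) (t-1) = xc TA n b (s+1) (t-1)" by (simp add: x)
      moreover have "xc TA n b s t \<le> xc TA n (ftil TA n j b) s t" by (simp add: x)
      ultimately show ?thesis using i0 by linarith
    next
      case True
      hence mj: "m = s+1" "j = t - 1" by auto
      have "beta TA n s j b < 0" using neg mj s by simp
      moreover have "beta TA n s j b = xc TA n b s j - xc TA n b s (j+1) - xc TA n b (s+1) (j-1) + xc TA n b (s+1) j"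
        using j by (intro betaA) auto
      moreover have "xc TA n b (s+1) (j-1) \<le> xc TA n b s j"
      proof (cases "2 \<le> j")
        case True thus ?thesis using inv s unfolding invA_def by blast
      next
        case False hence "j - 1 = 0" by simp
        thus ?thesis using nn unfolding nonneg_def by simp
      qed
      moreover have "j + 1 = t" "s + 1 = m" "t - 1 = j" using mj t by auto
      moreover have "xc TA n (ftil TA n j b) (s+1) (t-1) = xc TA n b (s+1) (t-1) + 1" using True by (simp add: x)
      moreover have "xc TA n (ftil TA n j b) s t = xc TA n b s t" using x[of s t] mj by simp
      ultimately show ?thesis by simp
    qed
  qed
  ultimately show ?thesis ..
qed

lemma epsA:
  assumes v: "valid_type TA n" and i: "i \<in> {1..n}" and nn: "nonneg TA n b" and inv: "invA n b"
  shows "0 \<le> eps TA n i b"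
proof -
  have L: "Tlen TA n i = n + 1 - i" by (simp add: Tlen_def)
  have "beta TA n (n+1-i) i b = xc TA n b (n+1-i) i - xc TA n b (n+1-i) (i+1) - xc TA n b (n+2-i) (i-1) + xc TA n b (n+2-i) i"
    using i betaA[of i n "n+1-i" b] by (simp add: Suc_diff_le)
  moreover have "xc TA n b (n+1-i) (i+1) = 0" "xc TA n b (n+2-i) i = 0"
    using i by (auto simp: xc_def Iset_def)
  moreover have "xc TA n b (n+2-i) (i-1) \<le> xc TA n b (n+1-i) i"
  proof (cases "2 \<le> i")
    case True
    hence "xc TA n b (n+1-i+1) (i-1) \<le> xc TA n b (n+1-i) i" using inv i unfolding invA_def by auto
    moreover have "n+1-i+1 = n+2-i" using i by auto
    ultimately show ?thesis by simp
  next
    case False thus ?thesis using nn unfolding nonneg_def by simp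
  qed
  ultimately have "0 \<le> beta TA n (Tlen TA n i) i b" by (simp add: L)
  thus ?thesis using eps_ge_beta[OF v i, of b] by linarith
qed


section \<open>Type B\<close>

lemma betaB1:
  assumes "1 \<le> t" "t < n"
  shows "beta TB n s t b = xc TB n b s t - xc TB n b s (t+1) - xc TB n b (s+1) (t-1) + xc TB n b (s+1) t"
proof -
  have u: "(\<Sum>k\<in>{t<..n}. cartan TB n t k * xc TB n b s k) = - xc TB n b s (t+1)"
  proof -
    have "(\<Sum>k\<in>{t<..n}. cartan TB n t k * xc TB n b s k) = (\<Sum>k\<in>{t<..n} \<inter> {t+1}. cartan TB n t k * xc TB n b s k)"
      by (rule sum_only) (auto simp: cartan_def)
    also have "\<dots> = - xc TB n b s (t+1)"
      using assms by (auto simp: cartan_def Int_insert_right)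
    finally show ?thesis .
  qed
  have l: "(\<Sum>k\<in>{1..<t}. cartan TB n t k * xc TB n b (s+1) k) = - xc TB n b (s+1) (t-1)"
  proof -
    have "(\<Sum>k\<in>{1..<t}. cartan TB n t k * xc TB n b (s+1) k) = (\<Sum>k\<in>{1..<t} \<inter> {t-1}. cartan TB n t k * xc TB n b (s+1) k)"
      by (rule sum_only) (auto simp: cartan_def)
    also have "\<dots> = - xc TB n b (s+1) (t-1)"
      using assms by (cases "2 \<le> t") (auto simp: cartan_def Int_insert_right)
    finally show ?thesis .
  qed
  show ?thesis unfolding beta_def u l by simp
qed

lemma betaB2:
  assumes "2 \<le> n"
  shows "beta TB n s n b = xc TB n b s n - 2 * xc TB n b (s+1) (n-1) + xc TB n b (s+1) n"
proof -
  have l: "(\<Sum>k\<in>{1..<n}. cartan TB n n k * xc TB n b (s+1) k) = - 2 * xc TB n b (s+1) (n-1)"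
  proof -
    have "(\<Sum>k\<in>{1..<n}. cartan TB n n k * xc TB n b (s+1) k) = (\<Sum>k\<in>{1..<n} \<inter> {n-1}. cartan TB n n k * xc TB n b (s+1) k)"
      by (rule sum_only) (auto simp: cartan_def)
    also have "\<dots> = - 2 * xc TB n b (s+1) (n-1)"
      using assms by (auto simp: cartan_def Int_insert_right)
    finally show ?thesis .
  qed
  show ?thesis unfolding beta_def l by simp
qed

definition invB where
  "invB n b = ((\<forall>s t. 1 \<le> s \<longrightarrow> 2 \<le> t \<longrightarrow> t \<le> n \<longrightarrow> xc TB n b (s+1) (t-1) \<le> xc TB n b s t) \<and>
               (\<forall>s t. n + 1 \<le> s + t \<longrightarrow> 1 \<le> t \<longrightarrow> t + 1 \<le> n \<longrightarrow> xc TB n b s (t+1) \<le> xc TB n b s t))"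

lemma closeB:
  assumes v: "valid_type TB n" and j: "j \<in> {1..n}" and nn: "nonneg TB n b" and inv: "invB n b"
  shows "nonneg TB n (ftil TB n j b) \<and> invB n (ftil TB n j b)"
proof -
  obtain m where m: "m \<in> {1..Tlen TB n j}"
    and x: "\<And>s t. xc TB n (ftil TB n j b) s t = xc TB n b s t + (if (s,t) = (m,j) then 1 else 0)"
    and neg: "2 \<le> m \<Longrightarrow> beta TB n (m - 1) j b < 0"
    using ftil_data[OF v j] by blast
  have n2: "2 \<le> n" using v by (simp add: valid_type_def)
  have B1: "\<And>s t. 1 \<le> s \<Longrightarrow> 2 \<le> t \<Longrightarrow> t \<le> n \<Longrightarrow> xc TB n b (s+1) (t-1) \<le> xc TB n b s t"
    using inv unfolding invB_def by blast
  have B2: "\<And>s t. n + 1 \<le> s + t \<Longrightarrow> 1 \<le> t \<Longrightarrow> t + 1 \<le> n \<Longrightarrow> xc TB n b s (t+1) \<le> xc TB n b s t"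
    using inv unfolding invB_def by blast
  have N: "\<And>s t. 0 \<le> xc TB n b s t" using nn unfolding nonneg_def by blast
  have xge: "\<And>s t. xc TB n b s t \<le> xc TB n (ftil TB n j b) s t" by (simp add: x)
  have xeq: "\<And>s t. (s,t) \<noteq> (m,j) \<Longrightarrow> xc TB n (ftil TB n j b) s t = xc TB n b s t" by (simp add: x)
  have xmj: "xc TB n (ftil TB n j b) m j = xc TB n b m j + 1" by (simp add: x)
  have "nonneg TB n (ftil TB n j b)" unfolding nonneg_def using N xge by (meson order_trans)
  moreover
  have "\<forall>s t. 1 \<le> s \<longrightarrow> 2 \<le> t \<longrightarrow> t \<le> n \<longrightarrow> xc TB n (ftil TB n j b) (s+1) (t-1) \<le> xc TB n (ftil TB n j b) s t"
  proof (intro allI impI)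
    fix s t :: nat assume s: "1 \<le> s" and t: "2 \<le> t" "t \<le> n"
    show "xc TB n (ftil TB n j b) (s+1) (t-1) \<le> xc TB n (ftil TB n j b) s t"
    proof (cases "(s+1, t-1) = (m, j)")
      case False thus ?thesis using B1[OF s t] xeq[OF False] xge[of s t] by linarith
    next
      case True
      hence mj: "m = s+1" "j = t - 1" by auto
      have "beta TB n s j b < 0" using neg mj s by simp
      moreover have "beta TB n s j b = xc TB n b s j - xc TB n b s (j+1) - xc TB n b (s+1) (j-1) + xc TB n b (s+1) j"
        using j mj t by (intro betaB1) auto
      moreover have "xc TB n b (s+1) (j-1) \<le> xc TB n b s j"
      proof (cases "2 \<le> j")
        case True thus ?thesis using B1[OF s True] mj t by simp
      next
        case False hence "j - 1 = 0" by simp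
        thus ?thesis using N by simp
      qed
      moreover have "j + 1 = t" "s + 1 = m" "t - 1 = j" using mj t by auto
      moreover have "xc TB n (ftil TB n j b) s t = xc TB n b s t" using xeq mj by simp
      ultimately show ?thesis using xmj by simp
    qed
  qed
  moreover
  have "\<forall>s t. n + 1 \<le> s + t \<longrightarrow> 1 \<le> t \<longrightarrow> t + 1 \<le> n \<longrightarrow> xc TB n (ftil TB n j b) s (t+1) \<le> xc TB n (ftil TB n j b) s t"
  proof (intro allI impI)
    fix s t :: nat assume st: "n + 1 \<le> s + t" and t: "1 \<le> t" "t + 1 \<le> n"
    show "xc TB n (ftil TB n j b) s (t+1) \<le> xc TB n (ftil TB n j b) s t"
    proof (cases "(s, t+1) = (m, j)")
      case False thus ?thesis using B2[OF st t] xeq[OF False] xge[of s t] by linarith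
    next
      case True
      hence mj: "m = s" "j = t + 1" by auto
      have s2: "2 \<le> s" using st t by simp
      have bneg: "beta TB n (s - 1) j b < 0" using neg mj s2 by simp
      have e1: "xc TB n (ftil TB n j b) s t = xc TB n b s t" using xeq mj by simp
      have e2: "xc TB n (ftil TB n j b) s (t+1) = xc TB n b s (t+1) + 1" using xmj mj by simp
      show ?thesis
      proof (cases "j < n")
        case True
        have "beta TB n (s-1) j b = xc TB n b (s-1) j - xc TB n b (s-1) (j+1) - xc TB n b (s-1+1) (j-1) + xc TB n b (s-1+1) j"
          using True mj by (intro betaB1) auto
        moreover have "xc TB n b (s-1) (j+1) \<le> xc TB n b (s-1) j"
          using B2[of "s-1" j] st mj True s2 by simp
        moreover have "s - 1 + 1 = s" "j - 1 = t" using s2 mj by auto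
        ultimately show ?thesis using bneg e1 e2 mj by simp
      next
        case False
        hence jn: "j = n" using j by simp
        have "beta TB n (s-1) n b = xc TB n b (s-1) n - 2 * xc TB n b (s-1+1) (n-1) + xc TB n b (s-1+1) n"
          using n2 by (intro betaB2)
        moreover have "xc TB n b (s-1+1) (n-1) \<le> xc TB n b (s-1) n"
          using B1[of "s-1" n] s2 n2 by simp
        moreover have "s - 1 + 1 = s" "t = n - 1" using s2 mj jn by auto
        ultimately show ?thesis using bneg e1 e2 mj jn by simp
      qed
    qed
  qed
  ultimately show ?thesis unfolding invB_def by blast
qed

lemma epsB:
  assumes v: "valid_type TB n" and i: "i \<in> {1..n}" and nn: "nonneg TB n b" and inv: "invB n b"
  shows "0 \<le> eps TB n i b"
proof -
  have n2: "2 \<le> n" using v by (simp add: valid_type_def)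
  have L: "Tlen TB n i = n" by (simp add: Tlen_def)
  have z: "\<And>t. xc TB n b (n+1) t = 0" by (auto simp: xc_def Iset_def)
  have "0 \<le> beta TB n n i b"
  proof (cases "i < n")
    case True
    have "beta TB n n i b = xc TB n b n i - xc TB n b n (i+1) - xc TB n b (n+1) (i-1) + xc TB n b (n+1) i"
      using True i by (intro betaB1) auto
    moreover have "xc TB n b n (i+1) \<le> xc TB n b n i" using inv i True unfolding invB_def by auto
    ultimately show ?thesis using z by simp
  next
    case False
    hence "i = n" using i by simp
    thus ?thesis using betaB2[OF n2, of n b] z nn unfolding nonneg_def by simp
  qed
  thus ?thesis using eps_ge_beta[OF v i, of b] L by simp
qed

section \<open>Type D\<close>

lemma betaD1:
  assumes "1 \<le> t" "t + 3 \<le> n"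
  shows "beta TD n s t b = xc TD n b s t - xc TD n b s (t+1) - xc TD n b (s+1) (t-1) + xc TD n b (s+1) t"
proof -
  have u: "(\<Sum>k\<in>{t<..n}. cartan TD n t k * xc TD n b s k) = - xc TD n b s (t+1)"
  proof -
    have "(\<Sum>k\<in>{t<..n}. cartan TD n t k * xc TD n b s k) = (\<Sum>k\<in>{t<..n} \<inter> {t+1}. cartan TD n t k * xc TD n b s k)"
      by (rule sum_only) (use assms in \<open>auto simp: cartan_def insert_commute doubleton_eq_iff\<close>)
    also have "\<dots> = - xc TD n b s (t+1)"
      using assms by (auto simp: cartan_def Int_insert_right doubleton_eq_iff)
    finally show ?thesis .
  qed
  have l: "(\<Sum>k\<in>{1..<t}. cartan TD n t k * xc TD n b (s+1) k) = - xc TD n b (s+1) (t-1)"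
  proof -
    have "(\<Sum>k\<in>{1..<t}. cartan TD n t k * xc TD n b (s+1) k) = (\<Sum>k\<in>{1..<t} \<inter> {t-1}. cartan TD n t k * xc TD n b (s+1) k)"
      by (rule sum_only) (use assms in \<open>auto simp: cartan_def doubleton_eq_iff\<close>)
    also have "\<dots> = - xc TD n b (s+1) (t-1)"
      using assms by (cases "2 \<le> t") (auto simp: cartan_def Int_insert_right doubleton_eq_iff)
    finally show ?thesis .
  qed
  show ?thesis unfolding beta_def u l by simp
qed

lemma betaD2:
  assumes "4 \<le> n"
  shows "beta TD n s (n-2) b = xc TD n b s (n-2) - xc TD n b s (n-1) - xc TD n b s n - xc TD n b (s+1) (n-3) + xc TD n b (s+1) (n-2)"
proof -
  have u: "(\<Sum>k\<in>{n-2<..n}. cartan TD n (n-2) k * xc TD n b s k) = - xc TD n b s (n-1) - xc TD n b s n"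
  proof -
    have e: "{n-2<..n} = {n-1, n}" using assms by auto
    have "cartan TD n (n-2) (n-1) = -1" "cartan TD n (n-2) n = -1" using assms
      by (auto simp: cartan_def doubleton_eq_iff)
    thus ?thesis unfolding e using assms by simp
  qed
  have l: "(\<Sum>k\<in>{1..<n-2}. cartan TD n (n-2) k * xc TD n b (s+1) k) = - xc TD n b (s+1) (n-3)"
  proof -
    have "(\<Sum>k\<in>{1..<n-2}. cartan TD n (n-2) k * xc TD n b (s+1) k) = (\<Sum>k\<in>{1..<n-2} \<inter> {n-3}. cartan TD n (n-2) k * xc TD n b (s+1) k)"
      by (rule sum_only) (use assms in \<open>auto simp: cartan_def doubleton_eq_iff\<close>)
    also have "\<dots> = - xc TD n b (s+1) (n-3)"
      using assms by (auto simp: cartan_def Int_insert_right doubleton_eq_iff)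
    finally show ?thesis .
  qed
  show ?thesis unfolding beta_def u l by simp
qed

lemma betaD3:
  assumes "4 \<le> n"
  shows "beta TD n s (n-1) b = xc TD n b s (n-1) - xc TD n b (s+1) (n-2) + xc TD n b (s+1) (n-1)"
proof -
  have u: "(\<Sum>k\<in>{n-1<..n}. cartan TD n (n-1) k * xc TD n b s k) = 0"
  proof -
    have e: "{n-1<..n} = {n}" using assms by auto
    have "cartan TD n (n-1) n = 0" using assms by (auto simp: cartan_def)
    thus ?thesis unfolding e by simp
  qed
  have l: "(\<Sum>k\<in>{1..<n-1}. cartan TD n (n-1) k * xc TD n b (s+1) k) = - xc TD n b (s+1) (n-2)"
  proof -
    have "(\<Sum>k\<in>{1..<n-1}. cartan TD n (n-1) k * xc TD n b (s+1) k) = (\<Sum>k\<in>{1..<n-1} \<inter> {n-2}. cartan TD n (n-1) k * xc TD n b (s+1) k)"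
      by (rule sum_only) (use assms in \<open>auto simp: cartan_def doubleton_eq_iff\<close>)
    also have "\<dots> = - xc TD n b (s+1) (n-2)"
      using assms by (auto simp: cartan_def Int_insert_right doubleton_eq_iff)
    finally show ?thesis .
  qed
  show ?thesis unfolding beta_def u l by simp
qed

lemma betaD4:
  assumes "4 \<le> n"
  shows "beta TD n s n b = xc TD n b s n - xc TD n b (s+1) (n-2) + xc TD n b (s+1) n"
proof -
  have l: "(\<Sum>k\<in>{1..<n}. cartan TD n n k * xc TD n b (s+1) k) = - xc TD n b (s+1) (n-2)"
  proof -
    have "(\<Sum>k\<in>{1..<n}. cartan TD n n k * xc TD n b (s+1) k) = (\<Sum>k\<in>{1..<n} \<inter> {n-2}. cartan TD n n k * xc TD n b (s+1) k)"
      by (rule sum_only) (use assms in \<open>auto simp: cartan_def doubleton_eq_iff\<close>)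
    also have "\<dots> = - xc TD n b (s+1) (n-2)"
      using assms by (auto simp: cartan_def Int_insert_right doubleton_eq_iff)
    finally show ?thesis .
  qed
  show ?thesis unfolding beta_def l by simp
qed


definition invD where
  "invD n b = (
    (\<forall>s t. 1 \<le> s \<longrightarrow> 2 \<le> t \<longrightarrow> t + 2 \<le> n \<longrightarrow> xc TD n b (s+1) (t-1) \<le> xc TD n b s t) \<and>
    (\<forall>s. 1 \<le> s \<longrightarrow> xc TD n b (s+1) n \<le> xc TD n b s (n-1)) \<and>
    (\<forall>s. 1 \<le> s \<longrightarrow> xc TD n b (s+1) (n-1) \<le> xc TD n b s n) \<and>
    (\<forall>s. 1 \<le> s \<longrightarrow> xc TD n b (s+1) (n-2) \<le> xc TD n b s (n-1) + xc TD n b s n) \<and>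
    (\<forall>s t. n \<le> s + t \<longrightarrow> 1 \<le> t \<longrightarrow> t + 3 \<le> n \<longrightarrow> xc TD n b s (t+1) \<le> xc TD n b s t) \<and>
    (\<forall>s. 2 \<le> s \<longrightarrow> xc TD n b s (n-1) + xc TD n b s n \<le> xc TD n b s (n-2)))"

lemma closeD:
  assumes v: "valid_type TD n" and j: "j \<in> {1..n}" and nn: "nonneg TD n b" and inv: "invD n b"
  shows "nonneg TD n (ftil TD n j b) \<and> invD n (ftil TD n j b)"
proof -
  obtain m where m: "m \<in> {1..Tlen TD n j}"
    and x: "\<And>s t. xc TD n (ftil TD n j b) s t = xc TD n b s t + (if (s,t) = (m,j) then 1 else 0)"
    and neg: "2 \<le> m \<Longrightarrow> beta TD n (m - 1) j b < 0"
    using ftil_data[OF v j] by blast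
  have n4: "4 \<le> n" using v by (simp add: valid_type_def)
  have D1: "\<And>s t. 1 \<le> s \<Longrightarrow> 2 \<le> t \<Longrightarrow> t + 2 \<le> n \<Longrightarrow> xc TD n b (s+1) (t-1) \<le> xc TD n b s t"
    using inv unfolding invD_def by blast
  have D2a: "\<And>s. 1 \<le> s \<Longrightarrow> xc TD n b (s+1) n \<le> xc TD n b s (n-1)"
    using inv unfolding invD_def by blast
  have D2b: "\<And>s. 1 \<le> s \<Longrightarrow> xc TD n b (s+1) (n-1) \<le> xc TD n b s n"
    using inv unfolding invD_def by blast
  have D3: "\<And>s. 1 \<le> s \<Longrightarrow> xc TD n b (s+1) (n-2) \<le> xc TD n b s (n-1) + xc TD n b s n"
    using inv unfolding invD_def by blast
  have D4: "\<And>s t. n \<le> s + t \<Longrightarrow> 1 \<le> t \<Longrightarrow> t + 3 \<le> n \<Longrightarrow> xc TD n b s (t+1) \<le> xc TD n b s t"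
    using inv unfolding invD_def by blast
  have D5: "\<And>s. 2 \<le> s \<Longrightarrow> xc TD n b s (n-1) + xc TD n b s n \<le> xc TD n b s (n-2)"
    using inv unfolding invD_def by blast
  have N: "\<And>s t. 0 \<le> xc TD n b s t" using nn unfolding nonneg_def by blast
  let ?y = "xc TD n (ftil TD n j b)"
  have xge: "\<And>s t. xc TD n b s t \<le> ?y s t" by (simp add: x)
  have xeq: "\<And>s t. (s,t) \<noteq> (m,j) \<Longrightarrow> ?y s t = xc TD n b s t" by (simp add: x)
  have xmj: "?y m j = xc TD n b m j + 1" by (simp add: x)
  have f0: "nonneg TD n (ftil TD n j b)" unfolding nonneg_def using N xge by (meson order_trans)

  have f1: "\<forall>s t. 1 \<le> s \<longrightarrow> 2 \<le> t \<longrightarrow> t + 2 \<le> n \<longrightarrow> ?y (s+1) (t-1) \<le> ?y s t"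
  proof (intro allI impI)
    fix s t :: nat assume s: "1 \<le> s" and t: "2 \<le> t" "t + 2 \<le> n"
    show "?y (s+1) (t-1) \<le> ?y s t"
    proof (cases "(s+1, t-1) = (m, j)")
      case False thus ?thesis using D1[OF s t] xeq[OF False] xge[of s t] by linarith
    next
      case True
      hence mj: "m = s+1" "j = t - 1" by auto
      have "beta TD n s j b < 0" using neg mj s by simp
      moreover have "beta TD n s j b = xc TD n b s j - xc TD n b s (j+1) - xc TD n b (s+1) (j-1) + xc TD n b (s+1) j"
        using mj t by (intro betaD1) auto
      moreover have "xc TD n b (s+1) (j-1) \<le> xc TD n b s j"
      proof (cases "2 \<le> j")
        case True thus ?thesis using D1[OF s True] mj t by simp
      next
        case False hence "j - 1 = 0" by simp
        thus ?thesis using N by simp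
      qed
      moreover have "j + 1 = t" "s + 1 = m" "t - 1 = j" using mj t by auto
      moreover have "?y s t = xc TD n b s t" using xeq mj by simp
      ultimately show ?thesis using xmj by simp
    qed
  qed

  have f2: "\<forall>s. 1 \<le> s \<longrightarrow> ?y (s+1) n \<le> ?y s (n-1)"
  proof (intro allI impI)
    fix s :: nat assume s: "1 \<le> s"
    show "?y (s+1) n \<le> ?y s (n-1)"
    proof (cases "(s+1, n) = (m, j)")
      case False thus ?thesis using D2a[OF s] xeq[OF False] xge[of s "n-1"] by linarith
    next
      case True
      hence mj: "m = s+1" "j = n" by auto
      have "beta TD n s n b < 0" using neg mj s by simp
      moreover note betaD4[OF n4, of s b] D3[OF s]
      moreover have "?y s (n-1) = xc TD n b s (n-1)" using xeq mj by simp
      moreover have "?y (s+1) n = xc TD n b (s+1) n + 1" using xmj mj by simp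
      ultimately show ?thesis by simp
    qed
  qed

  have f3: "\<forall>s. 1 \<le> s \<longrightarrow> ?y (s+1) (n-1) \<le> ?y s n"
  proof (intro allI impI)
    fix s :: nat assume s: "1 \<le> s"
    show "?y (s+1) (n-1) \<le> ?y s n"
    proof (cases "(s+1, n-1) = (m, j)")
      case False thus ?thesis using D2b[OF s] xeq[OF False] xge[of s n] by linarith
    next
      case True
      hence mj: "m = s+1" "j = n-1" by auto
      have "beta TD n s (n-1) b < 0" using neg mj s by simp
      moreover note betaD3[OF n4, of s b] D3[OF s]
      moreover have "?y s n = xc TD n b s n" using xeq mj by simp
      moreover have "?y (s+1) (n-1) = xc TD n b (s+1) (n-1) + 1" using xmj mj by simp
      ultimately show ?thesis by simp
    qed
  qed

  have f4: "\<forall>s. 1 \<le> s \<longrightarrow> ?y (s+1) (n-2) \<le> ?y s (n-1) + ?y s n"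
  proof (intro allI impI)
    fix s :: nat assume s: "1 \<le> s"
    show "?y (s+1) (n-2) \<le> ?y s (n-1) + ?y s n"
    proof (cases "(s+1, n-2) = (m, j)")
      case False thus ?thesis using D3[OF s] xeq[OF False] xge[of s n] xge[of s "n-1"] by linarith
    next
      case True
      hence mj: "m = s+1" "j = n-2" by auto
      have "beta TD n s (n-2) b < 0" using neg mj s by simp
      moreover note betaD2[OF n4, of s b]
      moreover have "xc TD n b (s+1) (n-2-1) \<le> xc TD n b s (n-2)" using D1[OF s, of "n-2"] n4 by simp
      moreover have "n - 2 - 1 = n - 3" by simp
      moreover have "?y s n = xc TD n b s n" "?y s (n-1) = xc TD n b s (n-1)" using xeq mj by auto
      moreover have "?y (s+1) (n-2) = xc TD n b (s+1) (n-2) + 1" using xmj mj by simp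
      ultimately show ?thesis by simp
    qed
  qed

  have f5: "\<forall>s t. n \<le> s + t \<longrightarrow> 1 \<le> t \<longrightarrow> t + 3 \<le> n \<longrightarrow> ?y s (t+1) \<le> ?y s t"
  proof (intro allI impI)
    fix s t :: nat assume st: "n \<le> s + t" and t: "1 \<le> t" "t + 3 \<le> n"
    show "?y s (t+1) \<le> ?y s t"
    proof (cases "(s, t+1) = (m, j)")
      case False thus ?thesis using D4[OF st t] xeq[OF False] xge[of s t] by linarith
    next
      case True
      hence mj: "m = s" "j = t + 1" by auto
      have s3: "3 \<le> s" using st t by simp
      have bneg: "beta TD n (s - 1) j b < 0" using neg mj s3 by simp
      have e1: "?y s t = xc TD n b s t" using xeq mj by simp
      have e2: "?y s (t+1) = xc TD n b s (t+1) + 1" using xmj mj by simp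
      show ?thesis
      proof (cases "j + 3 \<le> n")
        case True
        have "beta TD n (s-1) j b = xc TD n b (s-1) j - xc TD n b (s-1) (j+1) - xc TD n b (s-1+1) (j-1) + xc TD n b (s-1+1) j"
          using True mj by (intro betaD1) auto
        moreover have "xc TD n b (s-1) (j+1) \<le> xc TD n b (s-1) j"
          using D4[of "s-1" j] st mj True s3 by simp
        moreover have "s - 1 + 1 = s" "j - 1 = t" using s3 mj by auto
        ultimately show ?thesis using bneg e1 e2 mj by simp
      next
        case False
        hence jn: "j = n - 2" "t = n - 3" using mj t by auto
        have "beta TD n (s-1) (n-2) b = xc TD n b (s-1) (n-2) - xc TD n b (s-1) (n-1) - xc TD n b (s-1) n - xc TD n b (s-1+1) (n-3) + xc TD n b (s-1+1) (n-2)"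
          by (rule betaD2[OF n4])
        moreover have "xc TD n b (s-1) (n-1) + xc TD n b (s-1) n \<le> xc TD n b (s-1) (n-2)"
          using D5[of "s-1"] s3 by simp
        moreover have "s - 1 + 1 = s" "t + 1 = n - 2" using s3 jn n4 by auto
        ultimately show ?thesis using bneg e1 e2 jn by simp
      qed
    qed
  qed

  have f6: "\<forall>s. 2 \<le> s \<longrightarrow> ?y s (n-1) + ?y s n \<le> ?y s (n-2)"
  proof (intro allI impI)
    fix s :: nat assume s: "2 \<le> s"
    have ge: "xc TD n b s (n-2) \<le> ?y s (n-2)" by (rule xge)
    show "?y s (n-1) + ?y s n \<le> ?y s (n-2)"
    proof (cases "(s, n-1) = (m, j) \<or> (s, n) = (m, j)")
      case False
      hence "(s, n-1) \<noteq> (m, j)" "(s, n) \<noteq> (m, j)" by auto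
      hence "?y s (n-1) = xc TD n b s (n-1)" "?y s n = xc TD n b s n" using xeq by blast+
      thus ?thesis using D5[OF s] ge by linarith
    next
      case True
      have s1: "1 \<le> s - 1" "s - 1 + 1 = s" using s by auto
      have bneg: "beta TD n (s - 1) j b < 0" using neg True s by auto
      have "j \<noteq> n - 2" using True n4 by auto
      hence e0: "?y s (n-2) = xc TD n b s (n-2)" using x[of s "n-2"] by simp
      show ?thesis
      proof (cases "j = n - 1")
        case True
        hence mj: "m = s" using \<open>(s, n-1) = (m, j) \<or> (s, n) = (m, j)\<close> n4 by auto
        have "beta TD n (s-1) (n-1) b = xc TD n b (s-1) (n-1) - xc TD n b (s-1+1) (n-2) + xc TD n b (s-1+1) (n-1)"
          by (rule betaD3[OF n4])
        moreover have "xc TD n b (s-1+1) n \<le> xc TD n b (s-1) (n-1)" using D2a[OF s1(1)] .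
        moreover have "?y s (n-1) = xc TD n b s (n-1) + 1" "?y s n = xc TD n b s n"
          using x[of s "n-1"] x[of s n] mj True n4 by auto
        ultimately show ?thesis using bneg e0 s1 True by simp
      next
        case False
        hence mj: "m = s" "j = n" using \<open>(s, n-1) = (m, j) \<or> (s, n) = (m, j)\<close> by auto
        have "beta TD n (s-1) n b = xc TD n b (s-1) n - xc TD n b (s-1+1) (n-2) + xc TD n b (s-1+1) n"
          by (rule betaD4[OF n4])
        moreover have "xc TD n b (s-1+1) (n-1) \<le> xc TD n b (s-1) n" using D2b[OF s1(1)] .
        moreover have "?y s (n-1) = xc TD n b s (n-1)" "?y s n = xc TD n b s n + 1"
          using x[of s "n-1"] x[of s n] mj n4 by auto
        ultimately show ?thesis using bneg e0 s1 mj by simp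
      qed
    qed
  qed
  have "invD n (ftil TD n j b)" unfolding invD_def by (intro conjI f1 f2 f3 f4 f5 f6)
  then show ?thesis using f0 by blast
qed

lemma epsD:
  assumes v: "valid_type TD n" and i: "i \<in> {1..n}" and nn: "nonneg TD n b" and inv: "invD n b"
  shows "0 \<le> eps TD n i b"
proof -
  have n4: "4 \<le> n" using v by (simp add: valid_type_def)
  have L: "Tlen TD n i = n - 1" by (simp add: Tlen_def)
  have z: "\<And>t. xc TD n b (n-1+1) t = 0" using n4 by (auto simp: xc_def Iset_def)
  have N: "\<And>s t. 0 \<le> xc TD n b s t" using nn unfolding nonneg_def by blast
  have "0 \<le> beta TD n (n-1) i b"
  proof (cases "i + 3 \<le> n")
    case True
    have "beta TD n (n-1) i b = xc TD n b (n-1) i - xc TD n b (n-1) (i+1) - xc TD n b (n-1+1) (i-1) + xc TD n b (n-1+1) i"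
      using True i by (intro betaD1) auto
    moreover have "xc TD n b (n-1) (i+1) \<le> xc TD n b (n-1) i" using inv i True n4 unfolding invD_def by auto
    ultimately show ?thesis using z by simp
  next
    case False
    hence "i = n - 2 \<or> i = n - 1 \<or> i = n" using i by auto
    moreover
    have "0 \<le> beta TD n (n-1) (n-2) b"
    proof -
      have "xc TD n b (n-1) (n-1) + xc TD n b (n-1) n \<le> xc TD n b (n-1) (n-2)"
        using inv n4 unfolding invD_def by auto
      thus ?thesis using betaD2[OF n4, of "n-1" b] z by simp
    qed
    moreover have "0 \<le> beta TD n (n-1) (n-1) b" using betaD3[OF n4, of "n-1" b] z N[of "n-1" "n-1"] by simp
    moreover have "0 \<le> beta TD n (n-1) n b" using betaD4[OF n4, of "n-1" b] z N[of "n-1" n] by simp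
    ultimately show ?thesis by auto
  qed
  thus ?thesis using eps_ge_beta[OF v i, of b] L by simp
qed

definition good where
  "good X n b = (nonneg X n b \<and> (case X of TA \<Rightarrow> invA n b | TB \<Rightarrow> invB n b | TD \<Rightarrow> invD n b))"

lemma xc_zero [simp]: "xc X n (\<lambda>_. 0) s t = 0"
  by (simp add: xc_def)

lemma good_zero: "good X n (\<lambda>_. 0)"
  by (simp add: good_def nonneg_def invA_def invB_def invD_def split: ltype.splits)

lemma Binf_good:
  assumes v: "valid_type X n" and b: "b \<in> Binf X n"
  shows "good X n b"
  using b
proof (induction rule: Binf.induct)
  case zero thus ?case by (rule good_zero)
next
  case (step b i)
  show ?case
  proof (cases X)
    case TA thus ?thesis using step closeA[of n i b] v by (simp add: good_def)
  next
    case TB thus ?thesis using step closeB[of n i b] v by (simp add: good_def)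
  next
    case TD thus ?thesis using step closeD[of n i b] v by (simp add: good_def)
  qed
qed

lemma Binf_eps:
  assumes v: "valid_type X n" and i: "i \<in> {1..n}" and b: "b \<in> Binf X n"
  shows "0 \<le> eps X n i b"
proof -
  have g: "good X n b" by (rule Binf_good[OF v b])
  show ?thesis
  proof (cases X)
    case TA thus ?thesis using g epsA[of n i b] v i by (simp add: good_def)
  next
    case TB thus ?thesis using g epsB[of n i b] v i by (simp add: good_def)
  next
    case TD thus ?thesis using g epsD[of n i b] v i by (simp add: good_def)
  qed
qed

lemma finite_TSshape: "finite (TSshape X n i)"
proof -
  have "TSshape X n i \<subseteq> {0..n+1} \<times> {0..max i (n+1)}"
    by (auto simp: TSshape_def split: ltype.splits)
  thus ?thesis by (rule finite_subset) auto
qed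

lemma finite_PiS: "finite (PiS X n i)"
proof -
  have "PiS X n i \<subseteq> Pow (TSshape X n i)" by (auto simp: PiS_def)
  thus ?thesis using finite_TSshape by (meson finite_Pow_iff finite_subset)
qed

lemma epsS_ge: "\<mu> \<in> PiS X n i \<Longrightarrow> GammaS X n i \<mu> b \<le> epsS X n i b"
  unfolding epsS_def using finite_PiS by (intro Max_ge) auto

lemma uniform_beta:
  assumes v: "valid_type X n" and u: "1 \<le> u"
    and c: "(X = TA \<and> u \<le> n) \<or> (X = TB \<and> u < n) \<or> (X = TD \<and> (u + 3 \<le> n \<or> (u + 2 = n \<and> s = 0)))"
  shows "beta X n s u b = xc X n b s u - xc X n b s (u+1) - xc X n b (s+1) (u-1) + xc X n b (s+1) u"
proof -
  consider "X = TA" "u \<le> n" | "X = TB" "u < n" | "X = TD" "u + 3 \<le> n" | "X = TD" "u + 2 = n" "s = 0"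
    using c by blast
  thus ?thesis
  proof cases
    case 1 thus ?thesis using betaA u by simp
  next
    case 2 thus ?thesis using betaB1 u by simp
  next
    case 3 thus ?thesis using betaD1 u by simp
  next
    case 4
    have n4: "4 \<le> n" using v 4 by (simp add: valid_type_def)
    have "u = n - 2" "u + 1 = n - 1" "u - 1 = n - 3" using 4 by auto
    thus ?thesis using betaD2[OF n4, of s b] 4 by simp
  qed
qed

text \<open>non-staircase T_i^*: a single row; Gamma^* of the full row is x_{i,1}\<close>

lemma row_tele:
  fixes x :: "nat \<Rightarrow> nat \<Rightarrow> int"
  shows "(\<Sum>t\<in>{1..i}. x (t-1) (i+1-t) - x (t-1) (i+1-t+1) - x (t-1+1) (i+1-t-1) + x (t-1+1) (i+1-t))
         = x i 1 - x 0 (i+1) + x 0 i - x i 0"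
proof -
  define g where "g = (\<lambda>t. x t (i+1-t))"
  define h where "h = (\<lambda>t. x t (i-t))"
  have "(\<Sum>t\<in>{1..i}. x (t-1) (i+1-t) - x (t-1) (i+1-t+1) - x (t-1+1) (i+1-t-1) + x (t-1+1) (i+1-t))
      = (\<Sum>t\<in>{1..i}. (g t - g (t-1)) - (h t - h (t-1)))"
  proof (rule sum.cong)
    fix t assume t: "t \<in> {1..i}"
    have e1: "t - 1 + 1 = t" using t by auto
    have e2: "i+1-(t-1) = i+1-t+1" using t by auto
    have e3: "i-t = i+1-t-1" by simp
    have e4: "i-(t-1) = i+1-t" using t by auto
    have "g t = x t (i+1-t)" by (simp only: g_def)
    moreover have "g (t-1) = x (t-1) (i+1-t+1)" by (simp only: g_def e2)
    moreover have "h t = x t (i+1-t-1)" by (simp only: h_def e3)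
    moreover have "h (t-1) = x (t-1) (i+1-t)" by (simp only: h_def e4)
    ultimately show "x (t-1) (i+1-t) - x (t-1) (i+1-t+1) - x (t-1+1) (i+1-t-1) + x (t-1+1) (i+1-t)
        = (g t - g (t-1)) - (h t - h (t-1))"
      by (simp only: e1)
  qed simp
  also have "\<dots> = (\<Sum>t\<in>{1..i}. g t - g (t-1)) - (\<Sum>t\<in>{1..i}. h t - h (t-1))"
    by (rule sum_subtractf)
  also have "\<dots> = (g i - g 0) - (h i - h 0)"
    by (simp only: tele)
  also have "\<dots> = x i 1 - x 0 (i+1) + x 0 i - x i 0"
    unfolding g_def h_def by (simp add: algebra_simps)
  finally show ?thesis .
qed

lemma GammaS_row:
  assumes ns: "\<not> stair X n i"
  shows "GammaS X n i (TSshape X n i) b = (\<Sum>t\<in>{1..i}. betaS X n t (i+1-t) b)"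
proof -
  have sh: "TSshape X n i = (\<lambda>t. (1,t)) ` {1..i}" using ns by (auto simp: TSshape_def)
  have "GammaS X n i (TSshape X n i) b = (\<Sum>t\<in>{1..i}. TScoef X n i (1,t) * betaS X n (fst (TSidx X n i (1,t))) (snd (TSidx X n i (1,t))) b)"
    unfolding GammaS_def sh by (subst sum.reindex) (auto simp: inj_on_def)
  also have "\<dots> = (\<Sum>t\<in>{1..i}. betaS X n t (i+1-t) b)"
    using ns by (simp add: TScoef_def TSidx_def)
  finally show ?thesis .
qed

lemma epsS_row:
  assumes v: "valid_type X n" and i: "i \<in> {1..n}" and ns: "\<not> stair X n i" and nn: "nonneg X n b"
  shows "0 \<le> epsS X n i b"
proof -
  have "GammaS X n i (TSshape X n i) b = (\<Sum>t\<in>{1..i}. betaS X n t (i+1-t) b)" by (rule GammaS_row[OF ns])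
  also have "\<dots> = (\<Sum>t\<in>{1..i}. xc X n b (t-1) (i+1-t) - xc X n b (t-1) (i+1-t+1) - xc X n b (t-1+1) (i+1-t-1) + xc X n b (t-1+1) (i+1-t))"
  proof (rule sum.cong)
    fix t assume t: "t \<in> {1..i}"
    have c: "(X = TA \<and> i+1-t \<le> n) \<or> (X = TB \<and> i+1-t < n) \<or> (X = TD \<and> (i+1-t + 3 \<le> n \<or> (i+1-t + 2 = n \<and> t - 1 = 0)))"
      using ns t i v by (cases X) (auto simp: stair_def valid_type_def)
    show "betaS X n t (i+1-t) b = xc X n b (t-1) (i+1-t) - xc X n b (t-1) (i+1-t+1) - xc X n b (t-1+1) (i+1-t-1) + xc X n b (t-1+1) (i+1-t)"
      using t uniform_beta[OF v _ c, of b] by (simp add: betaS_beta Suc_le_eq)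
  qed simp
  also have "\<dots> = xc X n b i 1" by (simp only: row_tele) simp
  finally have G: "GammaS X n i (TSshape X n i) b = xc X n b i 1" .
  have "TSshape X n i \<in> PiS X n i"
  proof -
    have sh: "TSshape X n i = {(1,t) | t. 1 \<le> t \<and> t \<le> i}" using ns by (simp add: TSshape_def)
    have y: "young (TSshape X n i)" unfolding sh young_def by auto
    have "{t. (Suc (Suc 0), t) \<in> TSshape X n i} = {}" "\<And>s. s \<ge> 1 \<Longrightarrow> {t. (Suc s, t) \<in> TSshape X n i} = {}"
      unfolding sh by auto
    hence st: "strict (TSshape X n i)" unfolding strict_def rowlen_def by simp
    have "(1,1) \<in> TSshape X n i" using i sh by simp
    thus ?thesis using y st unfolding PiS_def by blast
  qed
  hence "GammaS X n i (TSshape X n i) b \<le> epsS X n i b" by (rule epsS_ge)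
  thus ?thesis using G nn unfolding nonneg_def by (metis order_trans)
qed

lemma tele_from:
  fixes h :: "nat \<Rightarrow> int"
  assumes "a \<le> b"
  shows "(\<Sum>t\<in>{Suc a..b}. h t - h (t - 1)) = h b - h a"
  using assms
proof (induction b)
  case 0 thus ?case by simp
next
  case (Suc b)
  show ?case
  proof (cases "a = Suc b")
    case True thus ?thesis by simp
  next
    case False
    hence ab: "a \<le> b" using Suc.prems by simp
    have "{Suc a..Suc b} = insert (Suc b) {Suc a..b}" using ab by auto
    thus ?thesis using Suc.IH[OF ab] by simp
  qed
qed

definition stairset :: "nat \<Rightarrow> (nat \<times> nat) set" where
  "stairset N = {(s,t). 1 \<le> s \<and> 1 \<le> t \<and> s + t \<le> N}"

lemma stairset_Sigma: "stairset N = Sigma {1..N-1} (\<lambda>s. {1..N-s})"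
  by (auto simp: stairset_def)

lemma stairset_PiS:
  assumes "2 \<le> N"
  shows "young (stairset N)" "strict (stairset N)" "stairset N \<noteq> {}"
proof -
  show "young (stairset N)" unfolding young_def stairset_def by auto
  have r: "rowlen (stairset N) s = N - s" if "1 \<le> s" for s
  proof -
    have "{t. (s,t) \<in> stairset N} = {1..N-s}" using that by (auto simp: stairset_def)
    thus ?thesis by (simp add: rowlen_def)
  qed
  show "strict (stairset N)" unfolding strict_def
  proof (intro allI impI)
    fix s :: nat assume s: "1 \<le> s" and p: "0 < rowlen (stairset N) (Suc s)"
    have "rowlen (stairset N) (Suc s) = N - Suc s" "rowlen (stairset N) s = N - s" using r s by auto
    thus "rowlen (stairset N) (Suc s) < rowlen (stairset N) s" using p by simp
  qed
  have "(1,1) \<in> stairset N" using assms by (simp add: stairset_def)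
  thus "stairset N \<noteq> {}" by blast
qed

lemma GammaS_Sigma:
  assumes "TSshape X n i = stairset N"
  shows "GammaS X n i (TSshape X n i) b =
    (\<Sum>s\<in>{1..N-1}. \<Sum>t\<in>{1..N-s}. TScoef X n i (s,t) * betaS X n (fst (TSidx X n i (s,t))) (snd (TSidx X n i (s,t))) b)"
  unfolding GammaS_def assms stairset_Sigma
  by (subst sum.Sigma) auto

section \<open>type B staircase\<close>

lemma rowB:
  assumes v: "valid_type TB n" and s: "1 \<le> s" "s \<le> n"
  shows "(\<Sum>t\<in>{1..n+1-s}. TScoef TB n n (s,t) * betaS TB n (fst (TSidx TB n n (s,t))) (snd (TSidx TB n n (s,t))) b)
    = xc TB n b (s-1) n - xc TB n b s n + 2 * (xc TB n b n s - xc TB n b n (s-1))"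
proof -
  let ?x = "xc TB n b"
  have n2: "2 \<le> n" using v by (simp add: valid_type_def)
  have st: "stair TB n n" by (simp add: stair_def)
  define T where "T = n + 1 - s"
  have T1: "1 \<le> T" using s by (simp add: T_def)
  define P where "P = (\<lambda>t. ?x (s+t-1) (n+1-t))"
  define R where "R = (\<lambda>t. ?x (s+t-1) (n-t))"
  have c1: "TScoef TB n n (s,1) * betaS TB n (fst (TSidx TB n n (s,1))) (snd (TSidx TB n n (s,1))) b
      = ?x (s-1) n - 2 * ?x s (n-1) + ?x s n"
  proof -
    have "betaS TB n s n b = beta TB n (s-1) n b" using s by (simp add: betaS_beta)
    also have "\<dots> = ?x (s-1) n - 2 * ?x (s-1+1) (n-1) + ?x (s-1+1) n" by (rule betaB2[OF n2])
    finally show ?thesis using s st by (simp add: TScoef_def TSidx_def)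
  qed
  have inner: "(\<Sum>t\<in>{2..T}. TScoef TB n n (s,t) * betaS TB n (fst (TSidx TB n n (s,t))) (snd (TSidx TB n n (s,t))) b)
      = (\<Sum>t\<in>{Suc 1..T}. 2 * ((P t - P (t-1)) - (R t - R (t-1))))"
  proof (rule sum.cong)
    fix t assume t: "t \<in> {Suc 1..T}"
    have t2: "2 \<le> t" "t \<le> n + 1 - s" using t by (auto simp: T_def)
    define u where "u = n + 1 - t"
    have u: "1 \<le> u" "u < n" using t2 s by (auto simp: u_def)
    have a: "s + t - 1 - 1 = s + t - 2" by arith
    have "betaS TB n (s+t-1) (n+1-t) b = beta TB n (s+t-1-1) (n+1-t) b"
      using t2 s by (intro betaS_beta) simp
    hence "betaS TB n (s+t-1) (n+1-t) b = beta TB n (s+t-2) u b"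
      by (simp only: a u_def)
    also have "\<dots> = ?x (s+t-2) u - ?x (s+t-2) (u+1) - ?x (s+t-2+1) (u-1) + ?x (s+t-2+1) u"
      by (rule uniform_beta[OF v u(1)]) (use u in simp)
    also have "\<dots> = (P t - P (t-1)) - (R t - R (t-1))"
    proof -
      have e1: "s+t-2+1 = s+t-1" "s+(t-1)-1 = s+t-2" using t2 s by auto
      have e2: "n+1-(t-1) = u+1" "n-(t-1) = u" "n-t = u-1" "n+1-t = u" using t2 s by (auto simp: u_def)
      show ?thesis unfolding P_def R_def by (simp only: e1 e2)
    qed
    finally show "TScoef TB n n (s,t) * betaS TB n (fst (TSidx TB n n (s,t))) (snd (TSidx TB n n (s,t))) b
        = 2 * ((P t - P (t-1)) - (R t - R (t-1)))"
      using t2 st by (simp add: TScoef_def TSidx_def)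
  qed simp
  also have "\<dots> = 2 * ((\<Sum>t\<in>{Suc 1..T}. P t - P (t-1)) - (\<Sum>t\<in>{Suc 1..T}. R t - R (t-1)))"
    by (simp add: sum_distrib_left[symmetric] sum_subtractf)
  also have "\<dots> = 2 * ((P T - P 1) - (R T - R 1))"
    using T1 by (simp only: tele_from)
  also have "\<dots> = 2 * ((?x n s - ?x s n) - (?x n (s-1) - ?x s (n-1)))"
  proof -
    have "s + T - 1 = n" "n + 1 - T = s" "n - T = s - 1" "s + 1 - 1 = s" "n + 1 - 1 = n" using s by (auto simp: T_def)
    thus ?thesis unfolding P_def R_def by simp
  qed
  finally have inner': "(\<Sum>t\<in>{2..T}. TScoef TB n n (s,t) * betaS TB n (fst (TSidx TB n n (s,t))) (snd (TSidx TB n n (s,t))) b)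
      = 2 * ((?x n s - ?x s n) - (?x n (s-1) - ?x s (n-1)))" .
  have "{1..T} = insert 1 {2..T}" using T1 by auto
  hence "(\<Sum>t\<in>{1..n+1-s}. TScoef TB n n (s,t) * betaS TB n (fst (TSidx TB n n (s,t))) (snd (TSidx TB n n (s,t))) b)
     = TScoef TB n n (s,1) * betaS TB n (fst (TSidx TB n n (s,1))) (snd (TSidx TB n n (s,1))) b
       + (\<Sum>t\<in>{2..T}. TScoef TB n n (s,t) * betaS TB n (fst (TSidx TB n n (s,t))) (snd (TSidx TB n n (s,t))) b)"
    by (simp add: T_def)
  thus ?thesis using c1 inner' by simp
qed

lemma GammaS_B:
  assumes v: "valid_type TB n"
  shows "GammaS TB n n (TSshape TB n n) b = xc TB n b n n"
proof -
  let ?x = "xc TB n b"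
  have sh: "TSshape TB n n = stairset (n+1)" by (simp add: TSshape_def stair_def stairset_def)
  have "GammaS TB n n (TSshape TB n n) b = (\<Sum>s\<in>{1..n}. \<Sum>t\<in>{1..n+1-s}. TScoef TB n n (s,t) * betaS TB n (fst (TSidx TB n n (s,t))) (snd (TSidx TB n n (s,t))) b)"
    using GammaS_Sigma[OF sh] by simp
  also have "\<dots> = (\<Sum>s\<in>{1..n}. (?x (s-1) n - ?x s n) + 2 * (?x n s - ?x n (s-1)))"
  proof (rule sum.cong)
    fix s assume "s \<in> {1..n}"
    thus "(\<Sum>t\<in>{1..n+1-s}. TScoef TB n n (s,t) * betaS TB n (fst (TSidx TB n n (s,t))) (snd (TSidx TB n n (s,t))) b)
      = (?x (s-1) n - ?x s n) + 2 * (?x n s - ?x n (s-1))"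
      using rowB[OF v, of s b] by simp
  qed simp
  also have "\<dots> = - (\<Sum>s\<in>{1..n}. ?x s n - ?x (s-1) n) + 2 * (\<Sum>s\<in>{1..n}. ?x n s - ?x n (s-1))"
    by (simp add: sum.distrib sum_distrib_left sum_subtractf)
  also have "\<dots> = ?x n n"
  proof -
    have t1: "(\<Sum>s\<in>{1..n}. ?x s n - ?x (s-1) n) = ?x n n - ?x 0 n" using tele[of "\<lambda>s. ?x s n" n] by simp
    have t2: "(\<Sum>s\<in>{1..n}. ?x n s - ?x n (s-1)) = ?x n n - ?x n 0" using tele[of "\<lambda>s. ?x n s" n] by simp
    show ?thesis unfolding t1 t2 by simp
  qed
  finally show ?thesis .
qed


section \<open>type D staircase\<close>

lemma rowD:
  assumes v: "valid_type TD n" and i: "n - 1 \<le> i" "i \<le> n" and s: "1 \<le> s" "s \<le> n - 1"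
  defines "c1 \<equiv> (\<lambda>s. if (odd s \<longleftrightarrow> i = n - 1) then n - 1 else n)"
  shows "(\<Sum>t\<in>{1..n-s}. TScoef TD n i (s,t) * betaS TD n (fst (TSidx TD n i (s,t))) (snd (TSidx TD n i (s,t))) b)
    = xc TD n b (s-1) (c1 s) + xc TD n b s (c1 s) - xc TD n b s (n-1) - (if s \<le> n - 2 then xc TD n b s n else 0)
      + (xc TD n b (n-1) s - xc TD n b (n-1) (s-1))"
proof -
  let ?x = "xc TD n b"
  have n4: "4 \<le> n" using v by (simp add: valid_type_def)
  have st: "stair TD n i" using i by (simp add: stair_def)
  define T where "T = n - s"
  have T1: "1 \<le> T" using s by (simp add: T_def)
  define P where "P = (\<lambda>t. ?x (s+t-1) (n-t))"
  define R where "R = (\<lambda>t. ?x (s+t-1) (n-t-1))"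
  have cell1: "TScoef TD n i (s,1) * betaS TD n (fst (TSidx TD n i (s,1))) (snd (TSidx TD n i (s,1))) b
      = ?x (s-1) (c1 s) - ?x s (n-2) + ?x s (c1 s)"
  proof -
    have e: "TSidx TD n i (s,1) = (s, c1 s)" "TScoef TD n i (s,1) = 1"
      using st by (auto simp: TSidx_def TScoef_def c1_def)
    have "betaS TD n s (c1 s) b = beta TD n (s-1) (c1 s) b" using s by (simp add: betaS_beta)
    also have "\<dots> = ?x (s-1) (c1 s) - ?x s (n-2) + ?x s (c1 s)"
    proof (cases "c1 s = n - 1")
      case True thus ?thesis using betaD3[OF n4, of "s-1" b] s by simp
    next
      case False hence "c1 s = n" by (simp add: c1_def split: if_splits)
      thus ?thesis using betaD4[OF n4, of "s-1" b] s by simp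
    qed
    finally show ?thesis using e by simp
  qed
  have inner: "(\<Sum>t\<in>{Suc 1..T}. TScoef TD n i (s,t) * betaS TD n (fst (TSidx TD n i (s,t))) (snd (TSidx TD n i (s,t))) b)
      = (\<Sum>t\<in>{Suc 1..T}. ((P t - P (t-1)) - (R t - R (t-1))) - (if t = 2 then ?x s n else 0))"
  proof (rule sum.cong)
    fix t assume t: "t \<in> {Suc 1..T}"
    have t2: "2 \<le> t" "t \<le> n - s" using t by (auto simp: T_def)
    define u where "u = n - t"
    have u: "1 \<le> u" "u + 2 \<le> n" using t2 s by (auto simp: u_def)
    have a: "s + t - 1 - 1 = s + t - 2" by arith
    have "betaS TD n (s+t-1) (n-t) b = beta TD n (s+t-1-1) (n-t) b"
      using t2 s by (intro betaS_beta) simp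
    hence bb: "betaS TD n (s+t-1) (n-t) b = beta TD n (s+t-2) u b"
      by (simp only: a u_def)
    have e1: "s+t-2+1 = s+t-1" "s+(t-1)-1 = s+t-2" using t2 s by auto
    have e2: "n-(t-1) = u+1" "n-t = u" "n-t-1 = u-1" "n-(t-1)-1 = u" using t2 s by (auto simp: u_def)
    have PR: "(P t - P (t-1)) - (R t - R (t-1)) = ?x (s+t-2) u - ?x (s+t-2) (u+1) - ?x (s+t-2+1) (u-1) + ?x (s+t-2+1) u"
      unfolding P_def R_def by (simp only: e1 e2) simp
    have "beta TD n (s+t-2) u b = ((P t - P (t-1)) - (R t - R (t-1))) - (if t = 2 then ?x s n else 0)"
    proof (cases "t = 2")
      case False
      hence "u + 3 \<le> n" using t2 s by (auto simp: u_def)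
      hence "beta TD n (s+t-2) u b = ?x (s+t-2) u - ?x (s+t-2) (u+1) - ?x (s+t-2+1) (u-1) + ?x (s+t-2+1) u"
        by (intro uniform_beta[OF v u(1)]) simp
      thus ?thesis using PR False by simp
    next
      case True
      hence uu: "u = n - 2" "s + t - 2 = s" "u + 1 = n - 1" "u - 1 = n - 3" using n4 by (auto simp: u_def)
      have "beta TD n s (n-2) b = ?x s (n-2) - ?x s (n-1) - ?x s n - ?x (s+1) (n-3) + ?x (s+1) (n-2)"
        by (rule betaD2[OF n4])
      thus ?thesis using PR True uu by simp
    qed
    moreover have "TSidx TD n i (s,t) = (s+t-1, n-t)" "TScoef TD n i (s,t) = 1"
      using st t2 by (auto simp: TSidx_def TScoef_def)
    ultimately show "TScoef TD n i (s,t) * betaS TD n (fst (TSidx TD n i (s,t))) (snd (TSidx TD n i (s,t))) b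
        = ((P t - P (t-1)) - (R t - R (t-1))) - (if t = 2 then ?x s n else 0)"
      using bb by simp
  qed simp
  also have "\<dots> = ((\<Sum>t\<in>{Suc 1..T}. P t - P (t-1)) - (\<Sum>t\<in>{Suc 1..T}. R t - R (t-1))) - (\<Sum>t\<in>{Suc 1..T}. if t = 2 then ?x s n else 0)"
    by (simp add: sum_subtractf)
  also have "\<dots> = ((P T - P 1) - (R T - R 1)) - (if 2 \<le> T then ?x s n else 0)"
  proof -
    have "(\<Sum>t\<in>{Suc 1..T}. if t = 2 then ?x s n else 0) = (if 2 \<in> {Suc 1..T} then ?x s n else 0)"
      by (rule sum.delta) simp
    thus ?thesis using T1 by (simp only: tele_from) simp
  qed
  also have "\<dots> = (?x (n-1) s - ?x s (n-1)) - (?x (n-1) (s-1) - ?x s (n-2)) - (if s \<le> n - 2 then ?x s n else 0)"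
  proof -
    have "s + T - 1 = n - 1" "n - T = s" "n - T - 1 = s - 1" "s + 1 - 1 = s" "n - 1 - 1 = n - 2" "(2 \<le> T) = (s \<le> n - 2)"
      using s by (auto simp: T_def)
    thus ?thesis unfolding P_def R_def by simp
  qed
  finally have inner': "(\<Sum>t\<in>{Suc 1..T}. TScoef TD n i (s,t) * betaS TD n (fst (TSidx TD n i (s,t))) (snd (TSidx TD n i (s,t))) b)
      = (?x (n-1) s - ?x s (n-1)) - (?x (n-1) (s-1) - ?x s (n-2)) - (if s \<le> n - 2 then ?x s n else 0)" .
  have "{1..T} = insert 1 {Suc 1..T}" using T1 by auto
  hence "(\<Sum>t\<in>{1..n-s}. TScoef TD n i (s,t) * betaS TD n (fst (TSidx TD n i (s,t))) (snd (TSidx TD n i (s,t))) b)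
     = TScoef TD n i (s,1) * betaS TD n (fst (TSidx TD n i (s,1))) (snd (TSidx TD n i (s,1))) b
       + (\<Sum>t\<in>{Suc 1..T}. TScoef TD n i (s,t) * betaS TD n (fst (TSidx TD n i (s,t))) (snd (TSidx TD n i (s,t))) b)"
    by (simp add: T_def)
  thus ?thesis using cell1 inner' by simp
qed


lemma GammaS_D:
  assumes v: "valid_type TD n" and i: "n - 1 \<le> i" "i \<le> n"
  defines "c1 \<equiv> (\<lambda>s. if (odd s \<longleftrightarrow> i = n - 1) then n - 1 else n)"
  shows "GammaS TD n i (TSshape TD n i) b = xc TD n b (n-1) (n-1) + xc TD n b (n-1) n - xc TD n b (n-1) (c1 n)"
proof -
  let ?x = "xc TD n b"
  have n4: "4 \<le> n" using v by (simp add: valid_type_def)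
  have sh: "TSshape TD n i = stairset n" using i by (simp add: TSshape_def stair_def stairset_def)
  define k where "k = (\<lambda>s. ?x s (c1 (s+1)))"
  define w where "w = (\<lambda>s. ?x (n-1) s)"
  have cc: "?x s (c1 s) + ?x s (c1 (s+1)) = ?x s (n-1) + ?x s n" for s
  proof -
    have "c1 s = n - 1 \<and> c1 (s+1) = n \<or> c1 s = n \<and> c1 (s+1) = n - 1"
      unfolding c1_def by auto
    thus ?thesis by auto
  qed
  have "GammaS TD n i (TSshape TD n i) b = (\<Sum>s\<in>{1..n-1}. \<Sum>t\<in>{1..n-s}. TScoef TD n i (s,t) * betaS TD n (fst (TSidx TD n i (s,t))) (snd (TSidx TD n i (s,t))) b)"
    using GammaS_Sigma[OF sh] by simp
  also have "\<dots> = (\<Sum>s\<in>{1..n-1}. (w s - w (s-1)) - (k s - k (s-1)) + (if s = n - 1 then ?x (n-1) n else 0))"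
  proof (rule sum.cong)
    fix s assume s: "s \<in> {1..n-1}"
    have r: "(\<Sum>t\<in>{1..n-s}. TScoef TD n i (s,t) * betaS TD n (fst (TSidx TD n i (s,t))) (snd (TSidx TD n i (s,t))) b)
      = ?x (s-1) (c1 s) + ?x s (c1 s) - ?x s (n-1) - (if s \<le> n - 2 then ?x s n else 0)
      + (?x (n-1) s - ?x (n-1) (s-1))"
      using rowD[OF v i, of s b] s unfolding c1_def by simp
    have k1: "k (s-1) = ?x (s-1) (c1 s)" using s by (simp add: k_def)
    have "?x s (c1 s) - ?x s (n-1) - (if s \<le> n - 2 then ?x s n else 0) = - k s + (if s = n - 1 then ?x (n-1) n else 0)"
      using cc[of s] s by (auto simp: k_def)
    thus "(\<Sum>t\<in>{1..n-s}. TScoef TD n i (s,t) * betaS TD n (fst (TSidx TD n i (s,t))) (snd (TSidx TD n i (s,t))) b)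
      = (w s - w (s-1)) - (k s - k (s-1)) + (if s = n - 1 then ?x (n-1) n else 0)"
      unfolding r w_def k1 by simp
  qed simp
  also have "\<dots> = (\<Sum>s\<in>{1..n-1}. w s - w (s-1)) - (\<Sum>s\<in>{1..n-1}. k s - k (s-1)) + (\<Sum>s\<in>{1..n-1}. if s = n - 1 then ?x (n-1) n else 0)"
    by (simp add: sum.distrib sum_subtractf)
  also have "\<dots> = (w (n-1) - w 0) - (k (n-1) - k 0) + ?x (n-1) n"
  proof -
    have "(\<Sum>s\<in>{1..n-1}. if s = n - 1 then ?x (n-1) n else 0) = (if n - 1 \<in> {1..n-1} then ?x (n-1) n else 0)"
      by (rule sum.delta) simp
    hence "(\<Sum>s\<in>{1..n-1}. if s = n - 1 then ?x (n-1) n else 0) = ?x (n-1) n" using n4 by simp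
    thus ?thesis by (simp only: tele)
  qed
  also have "\<dots> = ?x (n-1) (n-1) + ?x (n-1) n - ?x (n-1) (c1 n)"
    using n4 by (simp add: w_def k_def)
  finally show ?thesis .
qed

lemma epsS_nonneg:
  assumes v: "valid_type X n" and i: "i \<in> {1..n}" and nn: "nonneg X n b"
  shows "0 \<le> epsS X n i b"
proof (cases "stair X n i")
  case False thus ?thesis using epsS_row[OF v i False nn] by simp
next
  case True
  have N: "\<And>s t. 0 \<le> xc X n b s t" using nn unfolding nonneg_def by blast
  show ?thesis
  proof (cases X)
    case TA thus ?thesis using True by (simp add: stair_def)
  next
    case TB
    hence ii: "i = n" using True by (simp add: stair_def)
    have n2: "2 \<le> n" using v TB by (simp add: valid_type_def)
    have sh: "TSshape X n i = stairset (n+1)" using TB ii by (simp add: TSshape_def stair_def stairset_def)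
    have "TSshape X n i \<in> PiS X n i" using stairset_PiS[of "n+1"] n2 sh by (simp add: PiS_def)
    hence "GammaS X n i (TSshape X n i) b \<le> epsS X n i b" by (rule epsS_ge)
    moreover have "GammaS X n i (TSshape X n i) b = xc X n b n n" using GammaS_B[of n b] v TB ii by simp
    ultimately show ?thesis using N[of n n] by simp
  next
    case TD
    hence ii: "n - 1 \<le> i" "i \<le> n" using True i by (auto simp: stair_def)
    have n4: "4 \<le> n" using v TD by (simp add: valid_type_def)
    have sh: "TSshape X n i = stairset n" using TD ii by (simp add: TSshape_def stair_def stairset_def)
    have "TSshape X n i \<in> PiS X n i" using stairset_PiS[of n] n4 sh by (simp add: PiS_def)
    hence "GammaS X n i (TSshape X n i) b \<le> epsS X n i b" by (rule epsS_ge)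
    moreover have "GammaS X n i (TSshape X n i) b = xc X n b (n-1) (n-1) + xc X n b (n-1) n - xc X n b (n-1) (if (odd n \<longleftrightarrow> i = n - 1) then n - 1 else n)"
      using GammaS_D[OF _ ii, of b] v TD by simp
    ultimately show ?thesis using N[of "n-1" "n-1"] N[of "n-1" n] by (auto split: if_splits)
  qed
qed

section \<open>lattice structure of strict partitions\<close>

lemma young_Un: "young a \<Longrightarrow> young c \<Longrightarrow> young (a \<union> c)"
  unfolding young_def by blast

lemma young_Int: "young a \<Longrightarrow> young c \<Longrightarrow> young (a \<inter> c)"
  unfolding young_def by blast

lemma young_rowset:
  assumes y: "young \<mu>" and f: "finite \<mu>"
  shows "{t. (s,t) \<in> \<mu>} = {1..rowlen \<mu> s}"
proof -
  let ?A = "{t. (s,t) \<in> \<mu>}"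
  have fA: "finite ?A"
  proof -
    have "?A \<subseteq> snd ` \<mu>" by force
    thus ?thesis using f by (meson finite_imageI finite_subset)
  qed
  show ?thesis
  proof (cases "?A = {}")
    case True thus ?thesis by (simp add: rowlen_def)
  next
    case False
    define M where "M = Max ?A"
    have Min: "M \<in> ?A" unfolding M_def using fA False by (rule Max_in)
    have "?A = {1..M}"
    proof
      show "?A \<subseteq> {1..M}"
      proof
        fix t assume t: "t \<in> ?A"
        hence "t \<le> M" unfolding M_def using fA by simp
        moreover have "1 \<le> t" using young_pos[OF y] t by blast
        ultimately show "t \<in> {1..M}" by simp
      qed
      show "{1..M} \<subseteq> ?A"
      proof
        fix t assume t: "t \<in> {1..M}"
        have sM: "(s, M) \<in> \<mu>" using Min by simp
        have "1 \<le> s" using young_pos[OF y sM] by simp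
        thus "t \<in> ?A" using young_down[OF y sM, of s t] t by simp
      qed
    qed
    thus ?thesis by (simp add: rowlen_def)
  qed
qed

lemma rowlen_Un:
  assumes "young a" "young c" "finite a" "finite c"
  shows "rowlen (a \<union> c) s = max (rowlen a s) (rowlen c s)"
proof -
  have "{t. (s,t) \<in> a \<union> c} = {t. (s,t) \<in> a} \<union> {t. (s,t) \<in> c}" by auto
  also have "\<dots> = {1..max (rowlen a s) (rowlen c s)}"
    using young_rowset[OF assms(1,3)] young_rowset[OF assms(2,4)] by (auto simp: max_def)
  finally show ?thesis by (simp add: rowlen_def)
qed

lemma rowlen_Int:
  assumes "young a" "young c" "finite a" "finite c"
  shows "rowlen (a \<inter> c) s = min (rowlen a s) (rowlen c s)"
proof -
  have "{t. (s,t) \<in> a \<inter> c} = {t. (s,t) \<in> a} \<inter> {t. (s,t) \<in> c}" by auto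
  also have "\<dots> = {1..min (rowlen a s) (rowlen c s)}"
    using young_rowset[OF assms(1,3)] young_rowset[OF assms(2,4)] by (auto simp: min_def)
  finally show ?thesis by (simp add: rowlen_def)
qed

lemma strict_Un:
  assumes "young a" "young c" "finite a" "finite c" "strict a" "strict c"
  shows "strict (a \<union> c)"
  unfolding strict_def
proof (intro allI impI)
  fix s :: nat assume s: "1 \<le> s" and p: "0 < rowlen (a \<union> c) (Suc s)"
  have sa: "0 < rowlen a (Suc s) \<Longrightarrow> rowlen a (Suc s) < rowlen a s" using assms(5) s unfolding strict_def by blast
  have sc: "0 < rowlen c (Suc s) \<Longrightarrow> rowlen c (Suc s) < rowlen c s" using assms(6) s unfolding strict_def by blast
  show "rowlen (a \<union> c) (Suc s) < rowlen (a \<union> c) s"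
    using p sa sc unfolding rowlen_Un[OF assms(1-4)] by (auto simp: max_def split: if_splits)
qed

lemma strict_Int:
  assumes "young a" "young c" "finite a" "finite c" "strict a" "strict c"
  shows "strict (a \<inter> c)"
  unfolding strict_def
proof (intro allI impI)
  fix s :: nat assume s: "1 \<le> s" and p: "0 < rowlen (a \<inter> c) (Suc s)"
  have sa: "0 < rowlen a (Suc s) \<Longrightarrow> rowlen a (Suc s) < rowlen a s" using assms(5) s unfolding strict_def by blast
  have sc: "0 < rowlen c (Suc s) \<Longrightarrow> rowlen c (Suc s) < rowlen c s" using assms(6) s unfolding strict_def by blast
  show "rowlen (a \<inter> c) (Suc s) < rowlen (a \<inter> c) s"
    using p sa sc unfolding rowlen_Int[OF assms(1-4)] by (auto simp: min_def split: if_splits)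
qed

lemma young_11: "young \<mu> \<Longrightarrow> \<mu> \<noteq> {} \<Longrightarrow> (1,1) \<in> \<mu>"
proof -
  assume y: "young \<mu>" "\<mu> \<noteq> {}"
  then obtain s t where st: "(s,t) \<in> \<mu>" by auto
  have "1 \<le> s" "1 \<le> t" using young_pos[OF y(1) st] by auto
  thus ?thesis using young_down[OF y(1) st, of 1 1] by simp
qed

lemma PiS_Un_Int:
  assumes "a \<in> PiS X n i" "c \<in> PiS X n i"
  shows "a \<union> c \<in> PiS X n i" "a \<inter> c \<in> PiS X n i"
proof -
  have y: "young a" "young c" and sub: "a \<subseteq> TSshape X n i" "c \<subseteq> TSshape X n i"
    and st: "strict a" "strict c" and ne: "a \<noteq> {}" "c \<noteq> {}"
    using assms by (auto simp: PiS_def)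
  have f: "finite a" "finite c" using sub finite_TSshape by (auto intro: finite_subset)
  show "a \<union> c \<in> PiS X n i"
    using young_Un[OF y] strict_Un[OF y f st] sub ne by (auto simp: PiS_def)
  have "(1,1) \<in> a \<inter> c" using young_11[OF y(1) ne(1)] young_11[OF y(2) ne(2)] by simp
  thus "a \<inter> c \<in> PiS X n i"
    using young_Int[OF y] strict_Int[OF y f st] sub unfolding PiS_def by blast
qed

lemma GammaS_mod:
  assumes "a \<in> PiS X n i" "c \<in> PiS X n i"
  shows "GammaS X n i (a \<union> c) b + GammaS X n i (a \<inter> c) b = GammaS X n i a b + GammaS X n i c b"
proof -
  have f: "finite a" "finite c" using assms finite_TSshape by (auto simp: PiS_def intro: finite_subset)
  show ?thesis unfolding GammaS_def by (rule sum.union_inter[OF f])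
qed

lemma PiS_ne:
  assumes "valid_type X n" "i \<in> {1..n}"
  shows "{(1,1)} \<in> PiS X n i"
proof -
  have "young {(1::nat,1::nat)}" unfolding young_def by auto
  moreover have "strict {(1::nat,1::nat)}" unfolding strict_def rowlen_def by auto
  moreover have "(1,1) \<in> TSshape X n i"
    using assms by (auto simp: TSshape_def valid_type_def stair_def split: ltype.splits)
  ultimately show ?thesis unfolding PiS_def by blast
qed

definition attS where "attS X n i b = {\<mu>\<in>PiS X n i. GammaS X n i \<mu> b = epsS X n i b}"

lemma attS_lat:
  assumes "valid_type X n" "i \<in> {1..n}"
  shows "finite (attS X n i b)" "attS X n i b \<noteq> {}"
    "\<And>a c. a \<in> attS X n i b \<Longrightarrow> c \<in> attS X n i b \<Longrightarrow> a \<inter> c \<in> attS X n i b"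
    "\<And>a c. a \<in> attS X n i b \<Longrightarrow> c \<in> attS X n i b \<Longrightarrow> a \<union> c \<in> attS X n i b"
proof -
  show "finite (attS X n i b)" unfolding attS_def using finite_PiS by auto
  have "PiS X n i \<noteq> {}" using PiS_ne[OF assms] by blast
  hence "epsS X n i b \<in> (\<lambda>\<mu>. GammaS X n i \<mu> b) ` PiS X n i"
    unfolding epsS_def using finite_PiS by (intro Max_in) auto
  thus "attS X n i b \<noteq> {}" unfolding attS_def by auto
  fix a c assume a: "a \<in> attS X n i b" and c: "c \<in> attS X n i b"
  hence ap: "a \<in> PiS X n i" "c \<in> PiS X n i" by (auto simp: attS_def)
  have u: "a \<union> c \<in> PiS X n i" and it: "a \<inter> c \<in> PiS X n i" using PiS_Un_Int[OF ap] by auto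
  have "GammaS X n i (a \<union> c) b \<le> epsS X n i b" "GammaS X n i (a \<inter> c) b \<le> epsS X n i b"
    using epsS_ge[OF u] epsS_ge[OF it] by auto
  moreover have "GammaS X n i (a \<union> c) b + GammaS X n i (a \<inter> c) b = 2 * epsS X n i b"
    using GammaS_mod[OF ap, of b] a c by (simp add: attS_def)
  ultimately have "GammaS X n i (a \<union> c) b = epsS X n i b" "GammaS X n i (a \<inter> c) b = epsS X n i b" by auto
  thus "a \<inter> c \<in> attS X n i b" "a \<union> c \<in> attS X n i b" using u it by (auto simp: attS_def)
qed

lemma mmS_prop:
  assumes "valid_type X n" "i \<in> {1..n}"
  shows "mmS X n i b \<in> attS X n i b \<and> (\<forall>m\<in>attS X n i b. mmS X n i b \<subseteq> m)"
  unfolding mmS_def attS_def[symmetric] using minimal_in_lat[OF attS_lat(1-3)[OF assms]] by blast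

lemma MMS_prop:
  assumes "valid_type X n" "i \<in> {1..n}"
  shows "MMS X n i b \<in> attS X n i b \<and> (\<forall>m\<in>attS X n i b. m \<subseteq> MMS X n i b)"
  unfolding MMS_def attS_def[symmetric] using maximal_in_lat[OF attS_lat(1,2,4)[OF assms]] by blast


section \<open>the extended crystal\<close>

lemma le_hat_antisym: "le_hat a c \<Longrightarrow> le_hat c a \<Longrightarrow> a = c"
  by (cases a; cases c) auto

lemma the_max_hat:
  assumes "g \<in> A" "\<forall>d\<in>A. le_hat d g"
  shows "(THE \<gamma>. \<gamma> \<in> A \<and> (\<forall>\<delta>\<in>A. le_hat \<delta> \<gamma>)) = g"
  using assms by (intro the_equality) (auto intro: le_hat_antisym)

lemma the_min_hat:
  assumes "g \<in> A" "\<forall>d\<in>A. le_hat g d"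
  shows "(THE \<gamma>. \<gamma> \<in> A \<and> (\<forall>\<delta>\<in>A. le_hat \<gamma> \<delta>)) = g"
  using assms by (intro the_equality) (auto intro: le_hat_antisym)

lemma main_one:
  assumes v: "valid_type X n" and i: "i \<in> {1..n}" and bb: "bb \<in> Bhat X n"
  shows "kp_wt (poly X n) (\<lambda>_. 0) bb = wtHat X n bb
      \<and> kp_eps (poly X n) i k bb = epsHat X n i k bb
      \<and> kp_E (poly X n) i k bb = Some (EHat X n i k bb)
      \<and> kp_F (poly X n) i k bb = Some (FHat X n i k bb)"
proof -
  define b1 where "b1 = bb k"
  define b2 where "b2 = bb (k+1)"
  have B1: "b1 \<in> Binf X n" "b2 \<in> Binf X n" using bb by (auto simp: Bhat_def b1_def b2_def)
  define e where "e = eps X n i b1"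
  define es where "es = epsS X n i b2"
  have e0: "0 \<le> e" unfolding e_def by (rule Binf_eps[OF v i B1(1)])
  have es0: "0 \<le> es" unfolding es_def
    using epsS_nonneg[OF v i] Binf_good[OF v B1(2)] by (simp add: good_def)
  have wt: "kp_wt (poly X n) (\<lambda>_. 0) bb = wtHat X n bb"
    by (rule ext) (simp add: kp_wt_def wtHat_def poly_def)
  have kpe: "kp_eps (poly X n) i k bb = e - es"
    by (simp add: kp_eps_def poly_def e_def es_def b1_def b2_def)
  have epsh: "epsHat X n i k bb = e - es"
    by (simp add: epsHat_def GammaHat_def e_def es_def eps_def epsS_def b1_def b2_def)
  have GH: "\<And>la. GammaHat X n i k (Inl la) bb = Gamma X n i la b1"
           "\<And>mu. GammaHat X n i k (Inr mu) bb = GammaS X n i mu b2"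
    by (simp_all add: GammaHat_def b1_def b2_def)
  have PiH: "PiHat X n i = Inl ` Pi X n i \<union> Inr ` PiS X n i" by (simp add: PiHat_def)
  have maxH: "Max ((\<lambda>\<delta>. GammaHat X n i k \<delta> bb) ` PiHat X n i) = max e es"
  proof -
    have "(\<lambda>\<delta>. GammaHat X n i k \<delta> bb) ` PiHat X n i = (\<lambda>la. Gamma X n i la b1) ` Pi X n i \<union> (\<lambda>mu. GammaS X n i mu b2) ` PiS X n i"
      unfolding PiH image_Un image_image by (simp add: GH)
    moreover have "Pi X n i \<noteq> {}" using Pi_ne[OF v i] .
    moreover have "PiS X n i \<noteq> {}" using PiS_ne[OF v i] by blast
    ultimately show ?thesis
      using finite_Pi finite_PiS by (simp add: Max_Un e_def es_def eps_def epsS_def)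
  qed
  have att: "attHat X n i k bb = {\<gamma>\<in>PiHat X n i. GammaHat X n i k \<gamma> bb = max e es}"
    by (simp add: attHat_def maxH)
  have gle1: "\<And>la. la \<in> Pi X n i \<Longrightarrow> Gamma X n i la b1 \<le> e" unfolding e_def by (rule eps_ge)
  have gle2: "\<And>mu. mu \<in> PiS X n i \<Longrightarrow> GammaS X n i mu b2 \<le> es" unfolding es_def by (rule epsS_ge)
  have mm: "mm X n i b1 \<in> attP X n i b1" "\<forall>m\<in>attP X n i b1. mm X n i b1 \<subseteq> m" using mm_prop[OF v i] by auto
  have MM: "MM X n i b1 \<in> attP X n i b1" "\<forall>m\<in>attP X n i b1. m \<subseteq> MM X n i b1" using MM_prop[OF v i] by auto
  have mS: "mmS X n i b2 \<in> attS X n i b2" "\<forall>m\<in>attS X n i b2. mmS X n i b2 \<subseteq> m" using mmS_prop[OF v i] by auto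
  have MS: "MMS X n i b2 \<in> attS X n i b2" "\<forall>m\<in>attS X n i b2. m \<subseteq> MMS X n i b2" using MMS_prop[OF v i] by auto
  have inl_att: "Inl la \<in> attHat X n i k bb \<longleftrightarrow> la \<in> attP X n i b1 \<and> es \<le> e" for la
    using gle1[of la] by (auto simp: att PiH GH attP_def e_def[symmetric] max_def)
  have inr_att: "Inr mu \<in> attHat X n i k bb \<longleftrightarrow> mu \<in> attS X n i b2 \<and> e \<le> es" for mu
    using gle2[of mu] by (auto simp: att PiH GH attS_def es_def[symmetric] max_def)
  have E: "kp_E (poly X n) i k bb = Some (EHat X n i k bb)"
  proof (cases "e - es > 0")
    case True
    have Mh: "MHat X n i k bb = Inl (MM X n i b1)"
      unfolding MHat_def
    proof (rule the_max_hat)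
      show "Inl (MM X n i b1) \<in> attHat X n i k bb" using MM(1) True inl_att by simp
      show "\<forall>d\<in>attHat X n i k bb. le_hat d (Inl (MM X n i b1))"
      proof
        fix d assume d: "d \<in> attHat X n i k bb"
        show "le_hat d (Inl (MM X n i b1))"
        proof (cases d)
          case (Inl la) thus ?thesis using d MM(2) inl_att by auto
        next
          case (Inr mu) thus ?thesis using d True inr_att by auto
        qed
      qed
    qed
    have "etil X n i b1 = Some (\<lambda>p. b1 p - vsum X n (Tidx X n i) (MM X n i b1) p)"
      using True es0 by (simp add: etil_def e_def)
    thus ?thesis using True kpe by (simp add: kp_E_def EHat_def Mh poly_def b1_def)
  next
    case False
    have Mh: "MHat X n i k bb = Inr (mmS X n i b2)"
      unfolding MHat_def
    proof (rule the_max_hat)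
      show "Inr (mmS X n i b2) \<in> attHat X n i k bb" using mS(1) False inr_att by simp
      show "\<forall>d\<in>attHat X n i k bb. le_hat d (Inr (mmS X n i b2))"
      proof
        fix d assume d: "d \<in> attHat X n i k bb"
        show "le_hat d (Inr (mmS X n i b2))"
        proof (cases d)
          case (Inl la) thus ?thesis by simp
        next
          case (Inr mu) thus ?thesis using d mS(2) inr_att by auto
        qed
      qed
    qed
    show ?thesis using False kpe by (simp add: kp_E_def EHat_def Mh poly_def b2_def ftilS_def)
  qed
  have F: "kp_F (poly X n) i k bb = Some (FHat X n i k bb)"
  proof (cases "e - es \<ge> 0")
    case True
    have mh: "mHat X n i k bb = Inl (mm X n i b1)"
      unfolding mHat_def
    proof (rule the_min_hat)
      show "Inl (mm X n i b1) \<in> attHat X n i k bb" using mm(1) True inl_att by simp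
      show "\<forall>d\<in>attHat X n i k bb. le_hat (Inl (mm X n i b1)) d"
      proof
        fix d assume d: "d \<in> attHat X n i k bb"
        show "le_hat (Inl (mm X n i b1)) d"
        proof (cases d)
          case (Inl la) thus ?thesis using d mm(2) inl_att by auto
        next
          case (Inr mu) thus ?thesis by simp
        qed
      qed
    qed
    show ?thesis using True kpe by (simp add: kp_F_def FHat_def mh poly_def b1_def ftil_def)
  next
    case False
    have mh: "mHat X n i k bb = Inr (MMS X n i b2)"
      unfolding mHat_def
    proof (rule the_min_hat)
      show "Inr (MMS X n i b2) \<in> attHat X n i k bb" using MS(1) False inr_att by simp
      show "\<forall>d\<in>attHat X n i k bb. le_hat (Inr (MMS X n i b2)) d"
      proof
        fix d assume d: "d \<in> attHat X n i k bb"
        show "le_hat (Inr (MMS X n i b2)) d"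
        proof (cases d)
          case (Inl la) thus ?thesis using d False inl_att by auto
        next
          case (Inr mu) thus ?thesis using d MS(2) inr_att by auto
        qed
      qed
    qed
    have "etilS X n i b2 = Some (\<lambda>p. b2 p - vsum X n (TSidx X n i) (MMS X n i b2) p)"
      using False e0 by (simp add: etilS_def es_def)
    thus ?thesis using False kpe by (simp add: kp_F_def FHat_def mh poly_def b2_def)
  qed
  show ?thesis using wt kpe epsh E F by simp
qed

theorem theorem4p3:
  fixes X :: ltype and n i :: nat and k :: int
  assumes "valid_type X n" and "i \<in> {1..n}"
  shows "kp_set (Binf X n) (\<lambda>_. 0) = Bhat X n \<and>
    (\<forall>bb\<in>Bhat X n.
        kp_wt (poly X n) (\<lambda>_. 0) bb = wtHat X n bb
      \<and> kp_eps (poly X n) i k bb = epsHat X n i k bb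
      \<and> kp_E (poly X n) i k bb = Some (EHat X n i k bb)
      \<and> kp_F (poly X n) i k bb = Some (FHat X n i k bb))"
proof
  show "kp_set (Binf X n) (\<lambda>_. 0) = Bhat X n" by (simp add: kp_set_def Bhat_def)
  show "\<forall>bb\<in>Bhat X n.
        kp_wt (poly X n) (\<lambda>_. 0) bb = wtHat X n bb
      \<and> kp_eps (poly X n) i k bb = epsHat X n i k bb
      \<and> kp_E (poly X n) i k bb = Some (EHat X n i k bb)
      \<and> kp_F (poly X n) i k bb = Some (FHat X n i k bb)"
    using main_one[OF assms] by blast
qed


end
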